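(* If $\triangle PQR$ is an equilateral triangle in $\mathbb{R}^2$, then $\mu(\triangle PQR)=\frac12$.
   Context: $D$ is the open unit disk in $\mathbb{R}^2$ and $S^1$ its boundary, identified with $\mathbb{R}/\mathbb{Z}$ via $t\mapsto(\cos2\pi t,\sin2\pi t)$. For a closed non-degenerate triangle $T\subset D$ and $v\in S^1$, there are exactly two chords $vv_1,vv_2$ of $S^1$ whose lines support $T$; with $v_1$ the one reached first moving counterclockwise from $v$, set $\psi_T(v):=v_1$; $\rho(\psi_T)$ is its rotation number $\lim_{n\to\infty}\overline{\psi_T}^{\,n}(0)/n$ with $\overline{\psi_T}$ the lift with $\overline{\psi_T}(0)\in(0,1)$. For a triangle $T$ in $\mathbb{R}^2$, $\kappa(T)$ is its circumradius if $T$ is acute, and half the length of its longest side if $T$ is right or obtuse. $\mu(\triangle PQR)$ is the infimum of $\kappa(\triangle P'Q'R')$ over all triangles $\triangle P'Q'R'$ such that (1) $\triangle P'Q'R'\subset D$, (2) $\triangle P'Q'R'$ is similar to $\triangle PQR$, and (3) every triangle $\triangle P''Q''R''\subset D$ congruent to $\triangle P'Q'R'$ satisfies $\rho(\psi_{\triangle P''Q''R''})=\frac13$. *)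

theory Defs
  imports "HOL-Analysis.Analysis"
begin

text \<open>The plane R^2 is identified with the complex plane; the point (x,y) is x + i y.\<close>

definition unit_disk :: "complex set" where
  "unit_disk = ball 0 1"

definition circ :: "real \<Rightarrow> complex" where
  "circ t = cis (2 * pi * t)"

definition tri :: "complex \<Rightarrow> complex \<Rightarrow> complex \<Rightarrow> complex set" where
  "tri P Q R = convex hull {P, Q, R}"

definition nondegenerate :: "complex \<Rightarrow> complex \<Rightarrow> complex \<Rightarrow> bool" where
  "nondegenerate P Q R \<longleftrightarrow> \<not> collinear {P, Q, R}"

definition side :: "complex \<Rightarrow> complex \<Rightarrow> complex \<Rightarrow> real" where
  "side a b p = Im (cnj (b - a) * (p - a))"

definition supports_line :: "complex \<Rightarrow> complex \<Rightarrow> complex set \<Rightarrow> bool" where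
  "supports_line a b T \<longleftrightarrow> a \<noteq> b \<and> (\<exists>p\<in>T. side a b p = 0) \<and>
     ((\<forall>p\<in>T. side a b p \<ge> 0) \<or> (\<forall>p\<in>T. side a b p \<le> 0))"

text \<open>Counterclockwise angular gap (in units of full turns, in (0,1)) from v = circ t
  to the first endpoint v1 of a chord v v1 whose line supports T.\<close>
definition psi_gap :: "complex set \<Rightarrow> real \<Rightarrow> real" where
  "psi_gap T t = Inf {s. 0 < s \<and> s < 1 \<and> supports_line (circ t) (circ (t + s)) T}"

text \<open>The lift of psi_T with value in (0,1) at 0: psi_T (circ t) = circ (psi_lift T t).\<close>
definition psi_lift :: "complex set \<Rightarrow> real \<Rightarrow> real" where
  "psi_lift T t = t + psi_gap T t"

definition has_rotation_number :: "complex set \<Rightarrow> real \<Rightarrow> bool" where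
  "has_rotation_number T r \<longleftrightarrow> (\<lambda>n. (psi_lift T ^^ n) 0 / real n) \<longlonglongrightarrow> r"

definition acute :: "complex \<Rightarrow> complex \<Rightarrow> complex \<Rightarrow> bool" where
  "acute P Q R \<longleftrightarrow> (Q - P) \<bullet> (R - P) > 0 \<and> (P - Q) \<bullet> (R - Q) > 0 \<and> (P - R) \<bullet> (Q - R) > 0"

definition circumradius :: "complex \<Rightarrow> complex \<Rightarrow> complex \<Rightarrow> real" where
  "circumradius P Q R = (THE r. \<exists>C. dist C P = r \<and> dist C Q = r \<and> dist C R = r)"

definition kappa :: "complex \<Rightarrow> complex \<Rightarrow> complex \<Rightarrow> real" where
  "kappa P Q R = (if acute P Q R then circumradius P Q R
                  else Max {dist P Q, dist Q R, dist R P} / 2)"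

definition similar_tri :: "complex set \<Rightarrow> complex set \<Rightarrow> bool" where
  "similar_tri S T \<longleftrightarrow> (\<exists>c>0. \<exists>f. (\<forall>x y. dist (f x) (f y) = c * dist x y) \<and> f ` S = T)"

definition congruent_tri :: "complex set \<Rightarrow> complex set \<Rightarrow> bool" where
  "congruent_tri S T \<longleftrightarrow> (\<exists>f. (\<forall>x y. dist (f x) (f y) = dist x y) \<and> f ` S = T)"

definition mu :: "complex \<Rightarrow> complex \<Rightarrow> complex \<Rightarrow> real" where
  "mu P Q R = Inf {kappa P' Q' R' | P' Q' R'.
      nondegenerate P' Q' R' \<and> tri P' Q' R' \<subseteq> unit_disk \<and>
      similar_tri (tri P' Q' R') (tri P Q R) \<and>
      (\<forall>P'' Q'' R''. nondegenerate P'' Q'' R'' \<and> tri P'' Q'' R'' \<subseteq> unit_disk \<and>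
         congruent_tri (tri P'' Q'' R'') (tri P' Q' R') \<longrightarrow>
         has_rotation_number (tri P'' Q'' R'') (1/3))}"

end

theory Submission
  imports Defs
begin

lemma circ_norm [simp]: "norm (circ t) = 1"
  by (simp add: circ_def)

lemma circ_add: "circ (a + b) = circ a * circ b"
  by (simp add: circ_def cis_mult distrib_left)

lemma circ_int [simp]: "circ (of_int k) = 1"
proof -
  have "cis (2 * pi * real_of_int k) = 1"
    by (rule cis_multiple_2pi) simp
  then show ?thesis by (simp add: circ_def)
qed

lemma circ_one [simp]: "circ 1 = 1"
  using circ_int[of 1] by simp

lemma circ_periodic: "circ (t + of_int k) = circ t"
  by (simp add: circ_add)

lemma circ_plus1 [simp]: "circ (t + 1) = circ t"
  using circ_periodic[of t 1] by simp

lemma circ_eq_int: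
  assumes "circ a = circ b" shows "\<exists>k::int. a - b = of_int k"
proof -
  have "circ (a - b) = 1"
  proof -
    have "circ (a - b) * circ b = circ a" by (metis circ_add diff_add_cancel)
    moreover have "circ b \<noteq> 0" using circ_norm[of b] by (metis norm_zero zero_neq_one)
    ultimately show ?thesis using assms by (metis mult_cancel_right2)
  qed
  then have "cos (2 * pi * (a - b)) = 1"
    by (simp add: circ_def complex_eq_iff)
  then obtain n :: int where "2 * pi * (a - b) = real_of_int n * 2 * pi"
    using cos_one_2pi_int[THEN iffD1] by blast
  then have "(a - b) * (2*pi) = real_of_int n * (2*pi)" by (simp add: algebra_simps)
  then have "a - b = n" using pi_gt_zero by simp
  then show ?thesis by blast
qed

lemma circ_from:
  assumes "norm w = 1" "w \<noteq> circ t"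
  shows "\<exists>s. 0 < s \<and> s < 1 \<and> circ (t + s) = w"
proof -
  define z where "z = w / circ t"
  have ct0: "circ t \<noteq> 0" using circ_norm[of t] by (metis norm_zero zero_neq_one)
  have nz: "norm z = 1" using assms by (simp add: z_def norm_divide)
  have z0: "z \<noteq> 0" using nz by auto
  have z1: "z \<noteq> 1" using assms ct0 by (simp add: z_def)
  define a where "a = Arg z"
  have zc: "z = cis a" using cis_Arg[OF z0] nz by (simp add: a_def sgn_div_norm)
  have ab: "- pi < a" "a \<le> pi" using Arg_bounded[of z] by (auto simp: a_def)
  have a0: "a \<noteq> 0" using zc z1 by auto
  define s0 where "s0 = a / (2 * pi)"
  have cs0: "circ s0 = z" by (simp add: circ_def s0_def zc)
  show ?thesis
  proof (cases "0 < s0")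
    case True
    have "s0 \<le> 1/2" using ab by (simp add: s0_def field_simps)
    moreover have "circ (t + s0) = w" using cs0 ct0 by (simp add: circ_add z_def)
    ultimately show ?thesis using True by (intro exI[of _ s0]) auto
  next
    case False
    have "s0 \<noteq> 0" using a0 by (simp add: s0_def)
    then have "s0 < 0" using False by simp
    moreover have "- 1/2 < s0" using ab by (simp add: s0_def field_simps)
    moreover have "circ (t + (s0 + 1)) = w"
      using cs0 ct0 by (simp add: circ_add z_def)
    ultimately show ?thesis by (intro exI[of _ "s0+1"]) auto
  qed
qed

lemma trig3: fixes x y :: real shows "sin (2*y) + sin (2*x) - sin (2*x + 2*y) = 4 * sin x * sin y * sin (x + y)"
proof -
  have c: "sin x ^ 2 + cos x ^ 2 = 1" "sin y ^ 2 + cos y ^ 2 = 1"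
    by simp_all
  have e: "sin (2*x + 2*y) = sin (2*x) * cos (2*y) + cos (2*x) * sin (2*y)" by (rule sin_add)
  show ?thesis
    unfolding e sin_add sin_double cos_double using c by algebra
qed

lemma side_circ:
  "side (circ a) (circ b) (circ c) = 4 * sin (pi*(b-a)) * sin (pi*(c-b)) * sin (pi*(c-a))"
proof -
  have "side (circ a) (circ b) (circ c) = sin (2*pi*c - 2*pi*b) + sin (2*pi*b - 2*pi*a) - sin (2*pi*c - 2*pi*a)"
    by (simp add: side_def circ_def sin_diff algebra_simps)
  also have "\<dots> = sin (2*(pi*(c-b))) + sin (2*(pi*(b-a))) - sin (2*(pi*(b-a)) + 2*(pi*(c-b)))"
    by (simp add: algebra_simps)
  also have "\<dots> = 4 * sin (pi*(b-a)) * sin (pi*(c-b)) * sin (pi*(b-a) + pi*(c-b))"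
    by (rule trig3)
  also have "pi*(b-a) + pi*(c-b) = pi*(c-a)" by (simp add: algebra_simps)
  finally show ?thesis .
qed


lemma side_seg: "side a b (p + of_real l * (q - p)) = (1 - l) * side a b p + l * side a b q"
  by (simp add: side_def algebra_simps)

lemma side_line: "side a b (a + of_real l * (c - a)) = l * side a b c"
  using side_seg[of a b a l c] by (simp add: side_def)

lemma side_comb3:
  assumes "u + v + w = 1"
  shows "side a b (u *\<^sub>R A + v *\<^sub>R B + w *\<^sub>R C) = u * side a b A + v * side a b B + w * side a b C"
proof -
  have "a = u *\<^sub>R a + v *\<^sub>R a + w *\<^sub>R a" using assms by (metis scaleR_add_left scaleR_one)
  then have "side a b (u *\<^sub>R A + v *\<^sub>R B + w *\<^sub>R C) = Im (cnj (b - a) * (u *\<^sub>R (A - a) + v *\<^sub>R (B - a) + w *\<^sub>R (C - a)))"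
    unfolding side_def by (metis (no_types, lifting) add_diff_add scaleR_right_diff_distrib)
  also have "\<dots> = u * side a b A + v * side a b B + w * side a b C"
    by (simp add: side_def scaleR_conv_of_real algebra_simps)
  finally show ?thesis .
qed

lemma side_swap: "side a b c = - side a c b"
  by (simp add: side_def algebra_simps)

lemma side_cyc: "side a b c = side b c a"
  by (simp add: side_def algebra_simps)

lemma cmod_sq: "(cmod z)^2 = (Re z)^2 + (Im z)^2"
  by (simp add: cmod_power2)

lemma seg_normsq:
  fixes v w :: complex
  assumes "norm v = 1" "norm w = 1"
  shows "(norm (v + of_real l * (w - v)))^2 = 1 + l * (l - 1) * (norm (w - v))^2"
proof -
  have v: "(Re v)^2 + (Im v)^2 = 1" using assms(1) cmod_sq[of v] by simp
  have w: "(Re w)^2 + (Im w)^2 = 1" using assms(2) cmod_sq[of w] by simp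
  have "(norm (v + of_real l * (w - v)))^2 = (Re v + l * (Re w - Re v))^2 + (Im v + l * (Im w - Im v))^2"
    unfolding cmod_sq by simp
  also have "\<dots> = 1 + l * (l - 1) * ((Re w - Re v)^2 + (Im w - Im v)^2)"
    using v w by algebra
  also have "(Re w - Re v)^2 + (Im w - Im v)^2 = (norm (w - v))^2"
    unfolding cmod_sq by simp
  finally show ?thesis .
qed

lemma chord_point:
  assumes "norm v = 1" "norm w = 1" "v \<noteq> w" "side v w p = 0" "norm p < 1"
  shows "\<exists>l. 0 < l \<and> l < 1 \<and> p = v + of_real l * (w - v)"
proof -
  define d where "d = w - v"
  have d0: "d \<noteq> 0" using assms(3) by (simp add: d_def)
  define n where "n = (norm d)^2"
  have n0: "n > 0" using d0 by (simp add: n_def)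
  define l where "l = Re (cnj d * (p - v)) / n"
  have im0: "Im (cnj d * (p - v)) = 0" using assms(4) by (simp add: side_def d_def)
  have "cnj d * (p - v) = of_real (l * n)"
    using im0 n0 by (simp add: l_def complex_eq_iff)
  then have "d * (cnj d * (p - v)) = d * of_real (l * n)" by simp
  then have "of_real n * (p - v) = of_real n * (of_real l * d)"
    by (simp add: n_def complex_norm_square[symmetric] mult.assoc[symmetric] mult.commute)
  then have "p - v = of_real l * (w - v)" using n0 by (simp add: d_def)
  then have pe: "p = v + of_real l * (w - v)" by (metis add_diff_cancel_left' diff_add_cancel add.commute)
  have "(norm p)^2 < 1" using assms(5) by (simp add: power_less_one_iff)
  then have "1 + l * (l - 1) * n < 1" using seg_normsq[OF assms(1,2), of l] pe by (simp add: n_def d_def)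
  then have "l * (l - 1) < 0" using n0 by (simp add: mult_less_0_iff)
  then have "0 < l \<and> l < 1" by (auto simp: mult_less_0_iff)
  then show ?thesis using pe by blast
qed

lemma circ_chord_sq: "(norm (circ (t + s) - circ t))^2 = 4 * (sin (pi * s))^2"
proof -
  have "circ (t + s) - circ t = circ t * (circ s - 1)" by (simp add: circ_add algebra_simps)
  then have "norm (circ (t + s) - circ t) = norm (circ s - 1)" by (simp add: norm_mult)
  moreover have "(norm (circ s - 1))^2 = (cos (2 * pi * s) - 1)^2 + (sin (2 * pi * s))^2"
    unfolding cmod_sq by (simp add: circ_def)
  moreover have "(cos (2 * pi * s) - 1)^2 + (sin (2 * pi * s))^2 = 2 - 2 * cos (2 * pi * s)"
    using sin_cos_squared_add[of "2 * pi * s"] by algebra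
  moreover have "cos (2 * pi * s) = 1 - 2 * (sin (pi * s))^2"
    using cos_double_sin[of "pi * s"] by (simp add: mult.assoc)
  ultimately show ?thesis by simp
qed

lemma sin_pi_pos: "0 < x \<Longrightarrow> x < 1 \<Longrightarrow> 0 < sin (pi * x)"
  by (rule sin_gt_zero) auto

lemma sin_pi_neg: "-1 < x \<Longrightarrow> x < 0 \<Longrightarrow> sin (pi * x) < 0"
  using sin_pi_pos[of "-x"] by simp

lemma sin_pi_nonneg: "0 \<le> x \<Longrightarrow> x \<le> 1 \<Longrightarrow> 0 \<le> sin (pi * x)"
  by (rule sin_ge_zero) auto

lemma circ_ne: "0 < s \<Longrightarrow> s < 1 \<Longrightarrow> circ (t + s) \<noteq> circ t"
proof
  assume "0 < s" "s < 1" "circ (t + s) = circ t"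
  then obtain k :: int where "t + s - t = k" using circ_eq_int by blast
  then have "s = k" by simp
  with \<open>0 < s\<close> \<open>s < 1\<close> show False by (metis of_int_0_less_iff of_int_less_1_iff not_less zero_less_iff_neq_zero int_one_le_iff_zero_less less_le_not_le)
qed


lemma in_ball_norm: "p \<in> ball (0::complex) 1 \<longleftrightarrow> norm p < 1"
  by (simp add: mem_ball)

lemma side_circ_shift:
  "side (circ t) (circ (t + s)) (circ (t + u)) = 4 * sin (pi* s) * sin (pi*(u-s)) * sin (pi*u)"
  using side_circ[of t "t+s" "t+u"] by simp

lemma psi_gap_eq:
  assumes TD: "T \<subseteq> ball 0 1" and s: "0 < s" "s < 1"
    and left: "\<forall>p\<in>T. side (circ t) (circ (t+s)) p \<ge> 0"
    and touch: "\<exists>p\<in>T. side (circ t) (circ (t+s)) p = 0"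
  shows "psi_gap T t = s"
proof -
  define S where "S = {s. 0 < s \<and> s < 1 \<and> supports_line (circ t) (circ (t + s)) T}"
  have "s \<in> S"
    unfolding S_def supports_line_def using s left touch circ_ne[OF s, of t] by auto
  moreover have "\<forall>s'\<in>S. s \<le> s'"
  proof (rule ballI, rule ccontr)
    fix s' assume s'S: "s' \<in> S" and ns: "\<not> s \<le> s'"
    then have s': "0 < s'" "s' < s" and sup: "supports_line (circ t) (circ (t + s')) T"
      by (auto simp: S_def)
    from sup obtain q where qT: "q \<in> T" and q0: "side (circ t) (circ (t + s')) q = 0"
      and cases: "(\<forall>p\<in>T. side (circ t) (circ (t + s')) p \<ge> 0) \<or> (\<forall>p\<in>T. side (circ t) (circ (t + s')) p \<le> 0)"
      unfolding supports_line_def by blast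
    show False
      using cases
    proof
      assume all: "\<forall>p\<in>T. side (circ t) (circ (t + s')) p \<ge> 0"
      have "norm q < 1" using qT TD by (auto simp: in_ball_norm)
      then obtain l where l: "0 < l" "l < 1" "q = circ t + of_real l * (circ (t+s') - circ t)"
        using chord_point[of "circ t" "circ (t+s')" q] q0 circ_ne[of s' t] s' s by auto
      have "side (circ t) (circ (t+s)) q = l * side (circ t) (circ (t+s)) (circ (t+s'))"
        using l(3) side_line by simp
      also have "\<dots> = l * (4 * sin (pi* s) * sin (pi*(s'-s)) * sin (pi* s'))"
        by (simp add: side_circ_shift)
      also have "\<dots> < 0"
        using l(1) sin_pi_pos[OF s] sin_pi_pos[of s'] sin_pi_neg[of "s'-s"] s' s
        by (simp add: mult_pos_neg mult_neg_pos)
      finally show False using left qT by fastforce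
    next
      assume all: "\<forall>p\<in>T. side (circ t) (circ (t + s')) p \<le> 0"
      from touch obtain p where pT: "p \<in> T" and p0: "side (circ t) (circ (t+s)) p = 0" by blast
      have "norm p < 1" using pT TD by (auto simp: in_ball_norm)
      then obtain l where l: "0 < l" "l < 1" "p = circ t + of_real l * (circ (t+s) - circ t)"
        using chord_point[of "circ t" "circ (t+s)" p] p0 circ_ne[OF s, of t] by auto
      have "side (circ t) (circ (t+s')) p = l * side (circ t) (circ (t+s')) (circ (t+s))"
        using l(3) side_line by simp
      also have "\<dots> = l * (4 * sin (pi* s') * sin (pi*(s-s')) * sin (pi* s))"
        by (simp add: side_circ_shift)
      also have "\<dots> > 0"
        using l(1) sin_pi_pos[OF s] sin_pi_pos[of s'] sin_pi_pos[of "s-s'"] s' s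
        by simp
      finally show False using all pT by fastforce
    qed
  qed
  ultimately have "Inf S = s" by (intro cInf_eq_minimum) auto
  then show ?thesis by (simp add: psi_gap_def S_def)
qed

definition sig :: "complex \<Rightarrow> complex \<Rightarrow> complex" where
  "sig X v = (X - v) / (1 - cnj X * v)"

lemma sig_props:
  assumes v: "norm v = 1" and X: "norm X < 1"
  shows "norm (sig X v) = 1" "sig X v \<noteq> v" "side v (sig X v) X = 0"
proof -
  define Y where "Y = cnj v * X"
  have vv: "cnj v * v = 1" using v by (metis complex_norm_square mult.commute norm_one of_real_1 power_one)
  have XY: "X = v * Y" unfolding Y_def using vv by (metis mult.assoc mult.commute mult_1)
  have nY: "norm Y < 1" using X v by (simp add: Y_def norm_mult)
  have d: "1 - cnj X * v = 1 - cnj Y" unfolding Y_def using vv by (simp add: mult.assoc mult.commute)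
  have d0: "1 - cnj Y \<noteq> 0"
  proof
    assume "1 - cnj Y = 0" then have "Y = 1" by (metis complex_cnj_one complex_cnj_cnj right_minus_eq)
    then show False using nY by simp
  qed
  have sg: "sig X v = v * (Y - 1) / (1 - cnj Y)"
    unfolding sig_def d by (simp add: XY right_diff_distrib)
  have "norm (1 - cnj Y) = norm (Y - 1)"
    by (metis complex_cnj_diff complex_cnj_one complex_mod_cnj norm_minus_commute)
  then show "norm (sig X v) = 1" using d0 v by (simp add: sg norm_mult norm_divide)
  have ReY: "Re Y < 1" using nY complex_Re_le_cmod[of Y] by linarith
  show "sig X v \<noteq> v"
  proof
    assume "sig X v = v"
    then have "v * (Y - 1) = v * (1 - cnj Y)" using d0 by (simp add: sg divide_eq_eq)
    then have "Y - 1 = 1 - cnj Y" using v by (metis mult_cancel_left norm_zero zero_neq_one)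
    then have "Re Y = 1" by (simp add: complex_eq_iff)
    then show False using ReY by simp
  qed
  have e1: "sig X v - v = v * (Y + cnj Y - 2) / (1 - cnj Y)"
    using d0 by (simp add: sg field_simps)
  have Y1: "1 - Y \<noteq> 0" using ReY by auto
  have e2: "cnj (sig X v - v) = cnj v * (cnj Y + Y - 2) / (1 - Y)"
    unfolding e1 by simp
  have xv: "X - v = v * (Y - 1)" using XY by (simp add: algebra_simps)
  have "cnj (sig X v - v) * (X - v) = cnj v * (cnj Y + Y - 2) / (1 - Y) * (v * (Y - 1))"
    by (simp only: e2 xv)
  also have "\<dots> = (cnj v * v) * (Y + cnj Y - 2) * ((Y - 1) / (1 - Y))"
    using Y1 by (simp add: field_simps)
  also have "(Y - 1) / (1 - Y) = -1"
    using Y1 by (simp add: divide_eq_eq)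
  finally have "cnj (sig X v - v) * (X - v) = - (Y + cnj Y - 2)" using vv by simp
  then show "side v (sig X v) X = 0" by (simp add: side_def)
qed


lemma real_trans_aux:
  fixes ax ay bx by' cx cy :: real
  assumes "ax < 0" "bx < 0" "cx < 0" "ax * by' - ay * bx \<ge> 0" "bx * cy - by' * cx \<ge> 0"
  shows "ax * cy - ay * cx \<ge> 0"
proof -
  have e: "bx * (ax * cy - ay * cx) = ax * (bx * cy - by' * cx) + cx * (ax * by' - ay * bx)"
    by (simp add: algebra_simps)
  have "ax * (bx * cy - by' * cx) \<le> 0" using assms by (simp add: mult_nonpos_nonneg)
  moreover have "cx * (ax * by' - ay * bx) \<le> 0" using assms by (simp add: mult_nonpos_nonneg)
  ultimately have "bx * (ax * cy - ay * cx) \<le> 0" using e by linarith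
  then show ?thesis using assms(2) by (simp add: mult_le_0_iff)
qed

lemma side_rot:
  assumes "norm v = 1"
  shows "side v X Y = Re (cnj v * (X - v)) * Im (cnj v * (Y - v)) - Im (cnj v * (X - v)) * Re (cnj v * (Y - v))"
proof -
  have vv: "v * cnj v = 1" using assms by (metis complex_norm_square norm_one of_real_1 power_one)
  have "cnj (cnj v * (X - v)) * (cnj v * (Y - v)) = (v * cnj v) * (cnj (X - v) * (Y - v))"
    by (simp add: algebra_simps)
  then have e: "cnj (X - v) * (Y - v) = cnj (cnj v * (X - v)) * (cnj v * (Y - v))" using vv by simp
  have "\<And>a b. Im (cnj a * b) = Re a * Im b - Im a * Re b" by simp
  then show ?thesis unfolding side_def e by blast
qed

lemma re_rot_neg:
  assumes "norm v = 1" "norm X < 1"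
  shows "Re (cnj v * (X - v)) < 0"
proof -
  have vv: "cnj v * v = 1" using assms by (metis complex_norm_square mult.commute norm_one of_real_1 power_one)
  have "Re (cnj v * X) \<le> norm (cnj v * X)" by (rule complex_Re_le_cmod)
  also have "\<dots> < 1" using assms by (simp add: norm_mult)
  finally show ?thesis using vv by (simp add: right_diff_distrib)
qed

lemma side_trans:
  assumes "norm v = 1" "norm X < 1" "norm Y < 1" "norm Z < 1"
    "side v X Y \<ge> 0" "side v Y Z \<ge> 0"
  shows "side v X Z \<ge> 0"
  using real_trans_aux[OF re_rot_neg[OF assms(1,2)] re_rot_neg[OF assms(1,3)] re_rot_neg[OF assms(1,4)]]
    assms(5,6) unfolding side_rot[OF assms(1)] by blast

lemma side_refl: "side v X X = 0"
  by (simp add: side_def algebra_simps)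

lemma extremal:
  assumes "norm v = 1" "norm A < 1" "norm B < 1" "norm C < 1"
  shows "\<exists>X\<in>{A,B,C}. \<forall>Y\<in>{A,B,C}. side v X Y \<ge> 0"
proof -
  have tot: "\<And>X Y. side v X Y \<ge> 0 \<or> side v Y X \<ge> 0" using side_swap by (metis neg_0_le_iff_le nle_le)
  have tr: "\<And>X Y Z. X \<in> {A,B,C} \<Longrightarrow> Y \<in> {A,B,C} \<Longrightarrow> Z \<in> {A,B,C} \<Longrightarrow>
      side v X Y \<ge> 0 \<Longrightarrow> side v Y Z \<ge> 0 \<Longrightarrow> side v X Z \<ge> 0"
    using side_trans[OF assms(1)] assms(2-4) by blast
  have rf: "\<And>X. side v X X \<ge> 0" by (simp add: side_refl)
  show ?thesis
  proof (cases "side v A B \<ge> 0 \<and> side v A C \<ge> 0")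
    case True then show ?thesis using rf by auto
  next
    case F1: False
    show ?thesis
    proof (cases "side v B A \<ge> 0 \<and> side v B C \<ge> 0")
      case True then show ?thesis using rf by auto
    next
      case F2: False
      have t1: "side v A C \<ge> 0 \<Longrightarrow> side v C B \<ge> 0 \<Longrightarrow> side v A B \<ge> 0"
        using side_trans[OF assms(1) assms(2) assms(4) assms(3)] by blast
      have t2: "side v B C \<ge> 0 \<Longrightarrow> side v C A \<ge> 0 \<Longrightarrow> side v B A \<ge> 0"
        using side_trans[OF assms(1) assms(3) assms(4) assms(2)] by blast
      have "side v C A \<ge> 0 \<and> side v C B \<ge> 0"
        using F1 F2 t1 t2 tot[of A B] tot[of A C] tot[of B C] by blast
      then show ?thesis using rf by auto
    qed
  qed
qed

lemma side_scale2: "side a (a + of_real l * (c - a)) p = l * side a c p"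
  by (simp add: side_def algebra_simps)

lemma hull_side_nonneg:
  assumes "side a b A \<ge> 0" "side a b B \<ge> 0" "side a b C \<ge> 0" "p \<in> convex hull {A,B,C}"
  shows "side a b p \<ge> 0"
proof -
  from assms(4) obtain u v w where uvw: "0 \<le> u" "0 \<le> v" "0 \<le> w" "u + v + w = 1"
    "p = u *\<^sub>R A + v *\<^sub>R B + w *\<^sub>R C" unfolding convex_hull_3 by blast
  then have "side a b p = u * side a b A + v * side a b B + w * side a b C"
    using side_comb3 by simp
  then show ?thesis using uvw assms by simp
qed

lemma hull_ball:
  assumes "norm A < 1" "norm B < 1" "norm C < 1"
  shows "convex hull {A,B,C} \<subseteq> ball 0 1"
  using assms by (intro hull_minimal) (auto simp: in_ball_norm)

lemma left_chord_exists:
  assumes A: "norm A < 1" and B: "norm B < 1" and C: "norm C < 1"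
  shows "\<exists>s. 0 < s \<and> s < 1 \<and> (\<forall>p\<in>convex hull {A,B,C}. side (circ t) (circ (t+s)) p \<ge> 0)
            \<and> (\<exists>p\<in>convex hull {A,B,C}. side (circ t) (circ (t+s)) p = 0)"
proof -
  define v where "v = circ t"
  have v1: "norm v = 1" by (simp add: v_def)
  obtain X where XA: "X \<in> {A,B,C}" and ext: "\<forall>Y\<in>{A,B,C}. side v X Y \<ge> 0"
    using extremal[OF v1 A B C] by blast
  have X1: "norm X < 1" using XA A B C by auto
  define w where "w = sig X v"
  have w1: "norm w = 1" and wv: "w \<noteq> v" and wX: "side v w X = 0"
    using sig_props[OF v1 X1] by (auto simp: w_def)
  have wv': "w \<noteq> circ t" using wv by (simp add: v_def)
  obtain s where s: "0 < s" "s < 1" "circ (t + s) = w"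
    using circ_from[OF w1 wv'] by blast
  obtain l where l: "0 < l" "l < 1" "X = v + of_real l * (w - v)"
    using chord_point[OF v1 w1 wv[symmetric] wX X1] by blast
  have sc: "\<And>p. side v X p = l * side v w p" using side_scale2 l(3) by simp
  have "side v w Y \<ge> 0" if "Y \<in> {A,B,C}" for Y
  proof -
    have "0 \<le> side v X Y" using ext that by blast
    then have "0 \<le> l * side v w Y" using sc[of Y] by linarith
    then show ?thesis using l(1) by (simp add: zero_le_mult_iff)
  qed
  then have L0: "\<forall>p\<in>convex hull {A,B,C}. side v w p \<ge> 0"
    using hull_side_nonneg[of v w A B C] by blast
  have vw: "v = circ t" "w = circ (t+s)" using s(3) by (simp_all add: v_def)
  have L: "\<forall>p\<in>convex hull {A,B,C}. side (circ t) (circ (t+s)) p \<ge> 0"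
  proof
    fix p assume "p \<in> convex hull {A,B,C}"
    then have "side v w p \<ge> 0" using L0 by blast
    then show "side (circ t) (circ (t+s)) p \<ge> 0" using vw by simp
  qed
  have XT: "X \<in> convex hull {A,B,C}" by (rule hull_inc[OF XA])
  have Tc: "\<exists>p\<in>convex hull {A,B,C}. side (circ t) (circ (t+s)) p = 0"
  proof
    show "side (circ t) (circ (t+s)) X = 0" using wX vw by simp
  qed (rule XT)
  show ?thesis
    apply (rule exI[of _ s])
    using s(1,2) L Tc by simp
qed

lemma psi_char:
  assumes A: "norm A < 1" and B: "norm B < 1" and C: "norm C < 1"
  shows "0 < psi_gap (convex hull {A,B,C}) t \<and> psi_gap (convex hull {A,B,C}) t < 1 \<and>
     (\<forall>p\<in>convex hull {A,B,C}. side (circ t) (circ (t + psi_gap (convex hull {A,B,C}) t)) p \<ge> 0) \<and>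
     (\<exists>p\<in>convex hull {A,B,C}. side (circ t) (circ (t + psi_gap (convex hull {A,B,C}) t)) p = 0)"
proof -
  obtain s where s: "0 < s" "s < 1" "\<forall>p\<in>convex hull {A,B,C}. side (circ t) (circ (t+s)) p \<ge> 0"
    "\<exists>p\<in>convex hull {A,B,C}. side (circ t) (circ (t+s)) p = 0"
    using left_chord_exists[OF A B C] by blast
  have "psi_gap (convex hull {A,B,C}) t = s"
    using psi_gap_eq[OF hull_ball[OF A B C] s] .
  then show ?thesis using s by simp
qed

lemma psi_gap_periodic: "psi_gap T (t + of_int k) = psi_gap T t"
proof -
  have "\<And>s. circ (t + of_int k + s) = circ (t + s)"
    by (metis add.commute add.left_commute circ_periodic)
  moreover have "circ (t + of_int k) = circ t" by (rule circ_periodic)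
  ultimately show ?thesis by (simp add: psi_gap_def)
qed

lemma psi_lift_periodic: "psi_lift T (t + of_int k) = psi_lift T t + of_int k"
  by (simp add: psi_lift_def psi_gap_periodic)

lemma psi_lift_mono_local:
  assumes A: "norm A < 1" and B: "norm B < 1" and C: "norm C < 1"
    and t: "t1 \<le> t2" "t2 < t1 + 1"
  shows "psi_lift (convex hull {A,B,C}) t1 \<le> psi_lift (convex hull {A,B,C}) t2"
proof (rule ccontr)
  define T where "T = convex hull {A,B,C}"
  define s1 where "s1 = psi_gap T t1"
  define s2 where "s2 = psi_gap T t2"
  assume "\<not> psi_lift (convex hull {A,B,C}) t1 \<le> psi_lift (convex hull {A,B,C}) t2"
  then have lt: "t2 + s2 < t1 + s1" by (simp add: psi_lift_def s1_def s2_def T_def)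
  have c1: "0 < s1" "s1 < 1" "\<forall>p\<in>T. side (circ t1) (circ (t1 + s1)) p \<ge> 0"
    using psi_char[OF A B C, of t1] by (auto simp: s1_def T_def)
  have c2: "0 < s2" "s2 < 1" "\<exists>p\<in>T. side (circ t2) (circ (t2 + s2)) p = 0"
    using psi_char[OF A B C, of t2] by (auto simp: s2_def T_def)
  obtain q where qT: "q \<in> T" and q0: "side (circ t2) (circ (t2 + s2)) q = 0" using c2 by blast
  have nq: "norm q < 1" using qT hull_ball[OF A B C] by (auto simp: T_def in_ball_norm)
  obtain l where l: "0 < l" "l < 1" "q = circ t2 + of_real l * (circ (t2 + s2) - circ t2)"
    using chord_point[of "circ t2" "circ (t2+s2)" q] q0 circ_ne[of s2 t2] c2 nq by auto
  define u where "u = t2 - t1"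
  define u' where "u' = t2 + s2 - t1"
  have u: "0 \<le> u" "u < s1" using t lt c2 by (auto simp: u_def)
  have u': "0 < u'" "u' < s1" using t lt c2 by (auto simp: u'_def)
  have e1: "circ t2 = circ (t1 + u)" by (simp add: u_def)
  have e2: "circ (t2 + s2) = circ (t1 + u')" by (simp add: u'_def)
  have "side (circ t1) (circ (t1 + s1)) q =
        (1 - l) * side (circ t1) (circ (t1 + s1)) (circ (t1 + u)) + l * side (circ t1) (circ (t1 + s1)) (circ (t1 + u'))"
    using l(3) side_seg e1 e2 by simp
  also have "\<dots> = (1 - l) * (4 * sin (pi * s1) * sin (pi * (u - s1)) * sin (pi * u))
      + l * (4 * sin (pi * s1) * sin (pi * (u' - s1)) * sin (pi * u'))"
    by (simp add: side_circ_shift)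
  also have "\<dots> < 0"
  proof -
    have a: "0 < sin (pi * s1)" using sin_pi_pos c1 by simp
    have b: "sin (pi * (u - s1)) < 0" using sin_pi_neg[of "u - s1"] u c1 by simp
    have c: "0 \<le> sin (pi * u)" using sin_pi_nonneg[of u] u c1 by simp
    have b': "sin (pi * (u' - s1)) < 0" using sin_pi_neg[of "u' - s1"] u' c1 by simp
    have c': "0 < sin (pi * u')" using sin_pi_pos[of u'] u' c1 by simp
    have "(1 - l) * (4 * sin (pi * s1) * sin (pi * (u - s1)) * sin (pi * u)) \<le> 0"
      using a b c l by (simp add: mult_nonneg_nonpos mult_nonpos_nonneg mult_pos_neg mult_le_0_iff)
    moreover have "l * (4 * sin (pi * s1) * sin (pi * (u' - s1)) * sin (pi * u')) < 0"
      using a b' c' l by (simp add: mult_pos_neg mult_neg_pos)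
    ultimately show ?thesis by linarith
  qed
  finally show False using c1(3) qT by fastforce
qed

lemma psi_lift_mono:
  assumes A: "norm A < 1" and B: "norm B < 1" and C: "norm C < 1"
    and t: "t1 \<le> t2"
  shows "psi_lift (convex hull {A,B,C}) t1 \<le> psi_lift (convex hull {A,B,C}) t2"
proof -
  define F where "F = psi_lift (convex hull {A,B,C})"
  define k where "k = floor (t2 - t1)"
  define d where "d = t2 - t1 - of_int k"
  have d: "0 \<le> d" "d < 1" using floor_correct[of "t2 - t1"] unfolding d_def k_def by linarith+
  have k: "0 \<le> k" using t by (simp add: k_def)
  have "F t1 \<le> F (t1 + d)" using psi_lift_mono_local[OF A B C, of t1 "t1 + d"] d by (simp add: F_def)
  also have "\<dots> \<le> F (t1 + d) + of_int k" using k by simp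
  also have "\<dots> = F (t1 + d + of_int k)" by (simp add: F_def psi_lift_periodic)
  also have "t1 + d + of_int k = t2" by (simp add: d_def)
  finally show ?thesis by (simp add: F_def)
qed


locale liftmap =
  fixes F :: "real \<Rightarrow> real"
  assumes per: "\<And>x k. F (x + of_int k) = F x + of_int k"
    and mono: "\<And>x y. x \<le> y \<Longrightarrow> F x \<le> F y"
    and bnd: "\<And>x. x \<le> F x" "\<And>x. F x \<le> x + 1"
begin

lemma iter_per: "(F ^^ n) (x + of_int k) = (F ^^ n) x + of_int k"
  by (induction n arbitrary: x) (simp_all add: per)

lemma iter_mono: "x \<le> y \<Longrightarrow> (F ^^ n) x \<le> (F ^^ n) y"
  by (induction n arbitrary: x y) (simp_all add: mono)

lemma iter_bnd: "x \<le> (F ^^ n) x \<and> (F ^^ n) x \<le> x + real n"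
proof (induction n arbitrary: x)
  case 0 then show ?case by simp
next
  case (Suc n)
  have "(F ^^ Suc n) x = F ((F ^^ n) x)" by simp
  then show ?case using Suc[of x] bnd[of "(F ^^ n) x"] by simp
qed

lemma iter_diff:
  "(F ^^ n) y - (F ^^ n) x \<le> (y - x) + 1"
proof -
  define k where "k = ceiling (y - x)"
  have k: "y \<le> x + of_int k" "of_int k \<le> y - x + 1" using ceiling_correct[of "y - x"] unfolding k_def by linarith+
  have "(F ^^ n) y \<le> (F ^^ n) (x + of_int k)" by (rule iter_mono[OF k(1)])
  also have "\<dots> = (F ^^ n) x + of_int k" by (rule iter_per)
  finally show ?thesis using k(2) by linarith
qed

lemma rot_exact:
  assumes t0: "(F ^^ 3) t0 = t0 + 1"
  shows "(\<lambda>n. (F ^^ n) 0 / real n) \<longlonglongrightarrow> 1/3"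
proof -
  have m3: "(F ^^ (3 * m)) t0 = t0 + real m" for m
  proof (induction m)
    case 0 then show ?case by simp
  next
    case (Suc m)
    have "3 * Suc m = 3 + 3 * m" by simp
    then have "(F ^^ (3 * Suc m)) t0 = (F ^^ 3) ((F ^^ (3 * m)) t0)"
      by (simp only: funpow_add comp_apply)
    also have "\<dots> = (F ^^ 3) (t0 + of_int (int m))" using Suc by simp
    also have "\<dots> = t0 + 1 + of_int (int m)" by (simp only: iter_per t0)
    finally show ?case by simp
  qed
  define K where "K = 2 * \<bar>t0\<bar> + 5"
  have bound: "\<bar>(F ^^ n) 0 - real n / 3\<bar> \<le> K" for n
  proof -
    define m where "m = n div 3"
    define j where "j = n mod 3"
    have nj: "n = j + 3 * m" by (simp add: m_def j_def)
    have j3: "j < 3" by (simp add: j_def)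
    have "(F ^^ n) t0 = (F ^^ j) ((F ^^ (3 * m)) t0)" by (simp add: nj funpow_add)
    also have "\<dots> = (F ^^ j) (t0 + real m)" by (simp add: m3)
    finally have e: "(F ^^ n) t0 = (F ^^ j) (t0 + real m)" .
    have b1: "t0 + real m \<le> (F ^^ n) t0" "(F ^^ n) t0 \<le> t0 + real m + real j"
      using iter_bnd[of "t0 + real m" j] e by auto
    have rn: "real n / 3 = real m + real j / 3" by (simp add: nj field_simps)
    have d1: "(F ^^ n) 0 - (F ^^ n) t0 \<le> - t0 + 1" using iter_diff[of n 0 t0] by simp
    have d2: "(F ^^ n) t0 - (F ^^ n) 0 \<le> t0 + 1" using iter_diff[of n t0 0] by simp
    have "real j \<le> 2" using j3 by simp
    moreover have "\<bar>t0\<bar> \<ge> t0" "\<bar>t0\<bar> \<ge> - t0" by auto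
    moreover have "real j \<ge> 0" by simp
    ultimately show ?thesis using b1 d1 d2 rn unfolding K_def abs_le_iff by linarith
  qed
  have lo: "\<forall>\<^sub>F n in sequentially. 1/3 - K / real n \<le> (F ^^ n) 0 / real n"
  proof (rule eventually_sequentiallyI[of 1])
    fix n :: nat assume "1 \<le> n"
    then have n: "real n > 0" by simp
    have "real n / 3 - K \<le> (F ^^ n) 0" using bound[of n] by (simp add: abs_le_iff)
    then have "(real n / 3 - K) / real n \<le> (F ^^ n) 0 / real n"
      using n by (intro divide_right_mono) auto
    moreover have "(real n / 3 - K) / real n = 1/3 - K / real n" using n by (simp add: field_simps)
    ultimately show "1/3 - K / real n \<le> (F ^^ n) 0 / real n" by simp
  qed
  have hi: "\<forall>\<^sub>F n in sequentially. (F ^^ n) 0 / real n \<le> 1/3 + K / real n"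
  proof (rule eventually_sequentiallyI[of 1])
    fix n :: nat assume "1 \<le> n"
    then have n: "real n > 0" by simp
    have "(F ^^ n) 0 \<le> real n / 3 + K" using bound[of n] by (simp add: abs_le_iff)
    then have "(F ^^ n) 0 / real n \<le> (real n / 3 + K) / real n"
      using n by (intro divide_right_mono) auto
    moreover have "(real n / 3 + K) / real n = 1/3 + K / real n" using n by (simp add: field_simps)
    ultimately show "(F ^^ n) 0 / real n \<le> 1/3 + K / real n" by simp
  qed
  have l1: "(\<lambda>n. 1/3 - K / real n) \<longlonglongrightarrow> 1/3"
    using tendsto_diff[OF tendsto_const lim_const_over_n[of K]] by simp
  have l2: "(\<lambda>n. 1/3 + K / real n) \<longlonglongrightarrow> 1/3"
    using tendsto_add[OF tendsto_const lim_const_over_n[of K]] by simp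
  show ?thesis by (rule tendsto_sandwich[OF lo hi l1 l2])
qed

end

lemma rot_lower:
  fixes F :: "real \<Rightarrow> real"
  assumes c: "\<And>x. x + c \<le> F x" "c > 1/3"
  shows "\<not> (\<lambda>n. (F ^^ n) 0 / real n) \<longlonglongrightarrow> 1/3"
proof
  assume lim: "(\<lambda>n. (F ^^ n) 0 / real n) \<longlonglongrightarrow> 1/3"
  have it: "real n * c \<le> (F ^^ n) 0" for n
  proof (induction n)
    case 0 then show ?case by simp
  next
    case (Suc n)
    have "real (Suc n) * c = real n * c + c" by (simp add: algebra_simps)
    also have "\<dots> \<le> (F ^^ n) 0 + c" using Suc by simp
    also have "\<dots> \<le> (F ^^ Suc n) 0" using c(1)[of "(F ^^ n) 0"] by simp
    finally show ?case .
  qed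
  have "\<forall>n\<ge>1. c \<le> (F ^^ n) 0 / real n"
  proof (intro allI impI)
    fix n :: nat assume "1 \<le> n"
    then have "real n > 0" by simp
    then show "c \<le> (F ^^ n) 0 / real n" using it[of n] by (simp add: field_simps mult.commute)
  qed
  then have "c \<le> 1/3" using LIMSEQ_le_const[OF lim] by blast
  then show False using c(2) by simp
qed


lemma psi_liftmap:
  assumes A: "norm A < 1" and B: "norm B < 1" and C: "norm C < 1"
  shows "liftmap (psi_lift (convex hull {A,B,C}))"
proof
  fix x :: real and k :: int
  show "psi_lift (convex hull {A,B,C}) (x + of_int k) = psi_lift (convex hull {A,B,C}) x + of_int k"
    by (rule psi_lift_periodic)
next
  fix x y :: real assume "x \<le> y"
  then show "psi_lift (convex hull {A,B,C}) x \<le> psi_lift (convex hull {A,B,C}) y"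
    by (rule psi_lift_mono[OF A B C])
next
  fix x
  show "x \<le> psi_lift (convex hull {A,B,C}) x" "psi_lift (convex hull {A,B,C}) x \<le> x + 1"
    using psi_char[OF A B C, of x] by (auto simp: psi_lift_def)
qed

lemma arccos_gt_third:
  assumes "0 \<le> r" "r < 1/2"
  shows "pi / 3 < arccos r"
proof -
  have "arccos (1/2) < arccos r" using assms by (intro arccos_less_arccos) auto
  moreover have "arccos (1/2) = pi / 3" using arccos_cos[of "pi/3"] cos_60 by simp
  ultimately show ?thesis by simp
qed

theorem negative_dir:
  assumes A: "norm A \<le> r" and B: "norm B \<le> r" and C: "norm C \<le> r" and r: "r < 1/2"
  shows "\<not> has_rotation_number (convex hull {A,B,C}) (1/3)"
proof -
  define T where "T = convex hull {A,B,C}"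
  have r0: "0 \<le> r" using A norm_ge_zero order_trans by blast
  have A1: "norm A < 1" and B1: "norm B < 1" and C1: "norm C < 1" using A B C r by auto
  have Tr: "T \<subseteq> cball 0 r"
    unfolding T_def using A B C by (intro hull_minimal) (auto simp: convex_cball)
  define c where "c = arccos r / pi"
  have c3: "c > 1/3" using arccos_gt_third[OF r0 r] by (simp add: c_def field_simps)
  have gap: "c \<le> psi_gap T t" for t
  proof -
    define s where "s = psi_gap T t"
    have sc: "0 < s" "s < 1" "\<exists>p\<in>T. side (circ t) (circ (t + s)) p = 0"
      using psi_char[OF A1 B1 C1, of t] by (auto simp: s_def T_def)
    obtain p where pT: "p \<in> T" and p0: "side (circ t) (circ (t + s)) p = 0" using sc by blast
    have pr: "norm p \<le> r" using pT Tr by auto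
    obtain l where l: "0 < l" "l < 1" "p = circ t + of_real l * (circ (t + s) - circ t)"
      using chord_point[of "circ t" "circ (t+s)" p] p0 circ_ne[of s t] sc pr r by auto
    have "(norm p)^2 = 1 + l * (l - 1) * (norm (circ (t + s) - circ t))^2"
      using seg_normsq[of "circ t" "circ (t+s)" l] l(3) by simp
    also have "\<dots> = 1 + l * (l - 1) * (4 * (sin (pi * s))^2)" by (simp add: circ_chord_sq)
    also have "\<dots> \<ge> 1 - (sin (pi * s))^2"
    proof -
      have sq: "(l - 1/2)^2 \<ge> 0" by simp
      have "l * (l - 1) + 1/4 = (l - 1/2)^2" by (simp add: power2_eq_square algebra_simps)
      then have "l * (l - 1) \<ge> - 1/4" using sq by linarith
      moreover have "(sin (pi * s))^2 \<ge> 0" by simp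
      ultimately have "l * (l - 1) * (4 * (sin (pi * s))^2) \<ge> - 1/4 * (4 * (sin (pi * s))^2)"
        by (intro mult_right_mono) auto
      then show ?thesis by simp
    qed
    finally have "(cos (pi * s))^2 \<le> (norm p)^2" using sin_cos_squared_add[of "pi * s"] by linarith
    also have "\<dots> \<le> r^2" using pr by (simp add: power_mono)
    finally have "cos (pi * s) \<le> r" using r0 by (rule power2_le_imp_le)
    then have cc: "cos (pi * s) \<le> cos (arccos r)" using r0 r by simp
    have ab: "0 \<le> arccos r" "arccos r \<le> pi" using arccos_bounded[of r] r0 r by auto
    have ps: "0 \<le> pi * s" "pi * s \<le> pi" using sc by auto
    have "arccos r \<le> pi * s" using cos_mono_le_eq[OF ps ab] cc by blast
    then show ?thesis by (simp add: c_def s_def field_simps)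
  qed
  have "\<And>x. x + c \<le> psi_lift T x" using gap by (simp add: psi_lift_def)
  from rot_lower[OF this c3] show ?thesis by (simp add: has_rotation_number_def T_def)
qed


lemma sig_frac:
  assumes "D \<noteq> 0"
  shows "sig X (N / D) = (X * D - N) / (D - cnj X * N)"
proof (cases "D - cnj X * N = 0")
  case True
  then have "1 - cnj X * (N / D) = 0" using assms by (simp add: field_simps)
  then show ?thesis using True by (simp add: sig_def)
next
  case False
  then have "1 - cnj X * (N / D) \<noteq> 0" using assms by (simp add: field_simps)
  then show ?thesis unfolding sig_def using assms False by (simp add: field_simps)
qed

lemma circ_onto: "norm w = 1 \<Longrightarrow> \<exists>t. circ t = w"
proof (cases "w = circ 0")
  case True then show ?thesis by blast
next
  case False
  assume "norm w = 1"
  then obtain s where "circ (0 + s) = w" using circ_from False by blast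
  then show ?thesis by auto
qed

definition alp :: "complex \<Rightarrow> complex \<Rightarrow> complex \<Rightarrow> complex" where
  "alp A0 A1 A2 = -1 + A1 * cnj A0 + A2 * cnj A1 - A2 * cnj A0"

definition bet :: "complex \<Rightarrow> complex \<Rightarrow> complex \<Rightarrow> complex" where
  "bet A0 A1 A2 = A0 - A1 + A2 - A2 * cnj A1 * A0"

lemma sig3_fixed:
  assumes A: "norm A0 < 1" "norm A1 < 1" "norm A2 < 1" and w: "norm w = 1"
    and Q: "cnj (bet A0 A1 A2) * w + bet A0 A1 A2 * cnj w + (alp A0 A1 A2 + cnj (alp A0 A1 A2)) = 0"
  shows "sig A2 (sig A1 (sig A0 w)) = w"
proof -
  define b0 where "b0 = cnj A0"
  define b1 where "b1 = cnj A1"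
  define b2 where "b2 = cnj A2"
  define N1 where "N1 = A0 - w"
  define D1 where "D1 = 1 - b0 * w"
  define N2 where "N2 = A1 * D1 - N1"
  define D2 where "D2 = D1 - b1 * N1"
  define N3 where "N3 = A2 * D2 - N2"
  define D3 where "D3 = D2 - b2 * N2"
  have v1n: "norm (sig A0 w) = 1" using sig_props[OF w A(1)] by simp
  have v2n: "norm (sig A1 (sig A0 w)) = 1" using sig_props[OF v1n A(2)] by simp
  have v3n: "norm (sig A2 (sig A1 (sig A0 w))) = 1" using sig_props[OF v2n A(3)] by simp
  have D1: "D1 \<noteq> 0"
  proof
    assume "D1 = 0"
    then have "b0 * w = 1" by (simp add: D1_def)
    then have "norm (b0 * w) = 1" by simp
    moreover have "norm (b0 * w) < 1" using A(1) w by (simp add: b0_def norm_mult)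
    ultimately show False by simp
  qed
  have e1: "sig A0 w = N1 / D1" by (simp add: sig_def N1_def D1_def b0_def)
  have e2: "sig A1 (sig A0 w) = N2 / D2"
    unfolding e1 sig_frac[OF D1] by (simp add: N2_def D2_def b1_def)
  have D2: "D2 \<noteq> 0" using v2n e2 by auto
  have e3: "sig A2 (sig A1 (sig A0 w)) = N3 / D3"
    unfolding e2 sig_frac[OF D2] by (simp add: N3_def D3_def b2_def)
  have D3: "D3 \<noteq> 0" using v3n e3 by auto
  have ww: "w * cnj w = 1" using w by (metis complex_norm_square norm_one of_real_1 power_one)
  have Q': "cnj (bet A0 A1 A2) * w * w + (alp A0 A1 A2 + cnj (alp A0 A1 A2)) * w + bet A0 A1 A2 = 0"
  proof -
    have "w * (cnj (bet A0 A1 A2) * w + bet A0 A1 A2 * cnj w + (alp A0 A1 A2 + cnj (alp A0 A1 A2))) = 0"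
      using Q by simp
    moreover have "w * (cnj (bet A0 A1 A2) * w + bet A0 A1 A2 * cnj w + (alp A0 A1 A2 + cnj (alp A0 A1 A2)))
      = cnj (bet A0 A1 A2) * w * w + bet A0 A1 A2 * (w * cnj w) + (alp A0 A1 A2 + cnj (alp A0 A1 A2)) * w"
      by (simp add: algebra_simps)
    ultimately have "cnj (bet A0 A1 A2) * w * w + bet A0 A1 A2 + (alp A0 A1 A2 + cnj (alp A0 A1 A2)) * w = 0"
      using ww by simp
    then show ?thesis by (simp add: ac_simps)
  qed
  have "N3 - w * D3 = cnj (bet A0 A1 A2) * w * w + (alp A0 A1 A2 + cnj (alp A0 A1 A2)) * w + bet A0 A1 A2"
    unfolding N3_def D3_def N2_def D2_def N1_def D1_def b0_def b1_def b2_def alp_def bet_def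
    apply (simp only: complex_cnj_diff complex_cnj_add complex_cnj_mult complex_cnj_cnj complex_cnj_one complex_cnj_minus)
    by algebra
  then have "N3 = w * D3" using Q' by simp
  then show ?thesis using e3 D3 by simp
qed


lemma im_alp: "Im (alp A0 A1 A2) = side A0 A1 A2"
  by (simp add: alp_def side_def algebra_simps)

lemma alp_bet_norm:
  "(cmod (alp A0 A1 A2))^2 - (cmod (bet A0 A1 A2))^2 = (1 - (cmod A0)^2) * (1 - (cmod A1)^2) * (1 - (cmod A2)^2)"
  unfolding cmod_sq alp_def bet_def by (simp add: power2_eq_square algebra_simps)

lemma routh:
  "side (v0 + of_real l0 * (v1 - v0)) (v1 + of_real l1 * (v2 - v1)) (v2 + of_real l2 * (v0 - v2))
   = side v0 v1 v2 * (l0 * l1 * l2 + (1 - l0) * (1 - l1) * (1 - l2))"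
  by (simp add: side_def algebra_simps)

lemma exists_w:
  assumes "(Re a)^2 \<le> (cmod b)^2"
  shows "\<exists>w. norm w = 1 \<and> cnj b * w + b * cnj w + (a + cnj a) = 0"
proof (cases "b = 0")
  case True
  then have "Re a = 0" using assms by simp
  then have "a + cnj a = 0" by (simp add: complex_eq_iff)
  then show ?thesis using True by (intro exI[of _ 1]) simp
next
  case False
  define nb where "nb = cmod b"
  have nb: "nb > 0" using False by (simp add: nb_def)
  define c where "c = - Re a / nb"
  have c2: "c^2 \<le> 1"
  proof -
    have "c^2 = (Re a)^2 / nb^2" by (simp add: c_def power_divide)
    also have "\<dots> \<le> 1" using assms nb by (simp add: nb_def)
    finally show ?thesis .
  qed
  define z where "z = Complex c (sqrt (1 - c^2))"
  have z1: "norm z = 1" using c2 by (simp add: z_def cmod_def)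
  define w where "w = (b / of_real nb) * z"
  have w1: "norm w = 1" using nb z1 by (simp add: w_def norm_mult norm_divide nb_def)
  have bb: "cnj b * b = of_real (nb^2)" unfolding nb_def using complex_norm_square[of b] by (metis mult.commute)
  have bb2: "b * cnj b = of_real nb * of_real nb" using bb by (simp add: power2_eq_square mult.commute)
  have "cnj b * w = of_real nb * z"
    using nb by (simp add: w_def field_simps bb2)
  then have "Re (cnj b * w) = - Re a" using nb by (simp add: z_def c_def)
  then have "cnj b * w + b * cnj w + (a + cnj a) = 0"
  proof -
    assume h: "Re (cnj b * w) = - Re a"
    have "cnj b * w + b * cnj w = cnj b * w + cnj (cnj b * w)" by simp
    also have "\<dots> = of_real (2 * Re (cnj b * w))" by (simp add: complex_eq_iff)
    also have "\<dots> = of_real (- 2 * Re a)" by (subst h) simp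
    finally have "cnj b * w + b * cnj w = of_real (- 2 * Re a)" .
    moreover have "a + cnj a = of_real (2 * Re a)" by (simp add: complex_eq_iff)
    ultimately show ?thesis by simp
  qed
  then show ?thesis using w1 by blast
qed


lemma sin_pi_sum_pos_lt1:
  assumes "0 < x" "x < 2" "0 < sin (pi * x)"
  shows "x < 1"
proof (rule ccontr)
  assume "\<not> x < 1"
  then have "0 \<le> x - 1" "x - 1 < 1" using assms by auto
  then have "0 \<le> sin (pi * (x - 1))" by (intro sin_pi_nonneg) auto
  moreover have "sin (pi * x) = - sin (pi * (x - 1))"
  proof -
    have "pi * x = pi * (x - 1) + pi" by (simp add: algebra_simps)
    then show ?thesis by (simp add: sin_add)
  qed
  ultimately show False using assms by simp
qed

lemma exact_orbit:
  assumes A0: "norm A0 < 1" and A1: "norm A1 < 1" and A2: "norm A2 < 1"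
    and S: "side A0 A1 A2 > 0"
    and ineq: "(1 - (cmod A0)^2) * (1 - (cmod A1)^2) * (1 - (cmod A2)^2) \<le> (side A0 A1 A2)^2"
  shows "\<exists>t0. (psi_lift (convex hull {A0,A1,A2}) ^^ 3) t0 = t0 + 1"
proof -
  define T where "T = convex hull {A0,A1,A2}"
  have TD: "T \<subseteq> ball 0 1" using hull_ball[OF A0 A1 A2] by (simp add: T_def)
  define a where "a = alp A0 A1 A2"
  define b where "b = bet A0 A1 A2"
  have "(Re a)^2 \<le> (cmod b)^2"
  proof -
    have "(cmod a)^2 = (Re a)^2 + (Im a)^2" by (rule cmod_sq)
    moreover have "(Im a)^2 = (side A0 A1 A2)^2" by (simp add: a_def im_alp)
    moreover have "(cmod a)^2 - (cmod b)^2 = (1 - (cmod A0)^2) * (1 - (cmod A1)^2) * (1 - (cmod A2)^2)"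
      by (simp add: a_def b_def alp_bet_norm)
    ultimately show ?thesis using ineq by linarith
  qed
  then obtain w where w1: "norm w = 1" and Q: "cnj b * w + b * cnj w + (a + cnj a) = 0"
    using exists_w by blast
  define v0 where "v0 = w"
  define v1 where "v1 = sig A0 v0"
  define v2 where "v2 = sig A1 v1"
  have n0: "norm v0 = 1" by (simp add: v0_def w1)
  have n1: "norm v1 = 1" and d01: "v1 \<noteq> v0" and z0: "side v0 v1 A0 = 0"
    using sig_props[OF n0 A0] by (auto simp: v1_def)
  have n2: "norm v2 = 1" and d12: "v2 \<noteq> v1" and z1: "side v1 v2 A1 = 0"
    using sig_props[OF n1 A1] by (auto simp: v2_def)
  have fix3: "sig A2 v2 = v0"
    using sig3_fixed[OF A0 A1 A2 w1] Q by (simp add: v0_def v1_def v2_def a_def b_def)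
  have d20: "v0 \<noteq> v2" and z2: "side v2 v0 A2 = 0"
    using sig_props[OF n2 A2] fix3 by auto
  obtain l0 where l0: "0 < l0" "l0 < 1" "A0 = v0 + of_real l0 * (v1 - v0)"
    using chord_point[OF n0 n1 d01[symmetric] z0 A0] by blast
  obtain l1 where l1: "0 < l1" "l1 < 1" "A1 = v1 + of_real l1 * (v2 - v1)"
    using chord_point[OF n1 n2 d12[symmetric] z1 A1] by blast
  obtain l2 where l2: "0 < l2" "l2 < 1" "A2 = v2 + of_real l2 * (v0 - v2)"
    using chord_point[OF n2 n0 d20[symmetric] z2 A2] by blast
  define sv where "sv = side v0 v1 v2"
  have "side A0 A1 A2 = sv * (l0 * l1 * l2 + (1 - l0) * (1 - l1) * (1 - l2))"
    unfolding sv_def by (subst l0(3), subst l1(3), subst l2(3), rule routh)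
  moreover have "l0 * l1 * l2 + (1 - l0) * (1 - l1) * (1 - l2) > 0"
    using l0 l1 l2 by (simp add: add_pos_pos)
  ultimately have sv: "sv > 0" using S by (simp add: zero_less_mult_iff)
  obtain t0 where t0: "circ t0 = v0" using circ_onto[OF n0] by blast
  obtain s0 where s0: "0 < s0" "s0 < 1" "circ (t0 + s0) = v1"
    using circ_from[OF n1] d01 t0 by force
  obtain s1 where s1: "0 < s1" "s1 < 1" "circ (t0 + s0 + s1) = v2"
    using circ_from[OF n2] d12 s0(3) by force
  obtain s2 where s2: "0 < s2" "s2 < 1" "circ (t0 + s0 + s1 + s2) = v0"
    using circ_from[OF n0] d20 s1(3) by force
  have "sv = 4 * sin (pi * s0) * sin (pi * (s0 + s1 - s0)) * sin (pi * (s0 + s1))"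
    using side_circ_shift[of t0 s0 "s0 + s1"] t0 s0(3) s1(3) by (simp add: sv_def add.assoc)
  then have e: "sv = (4 * sin (pi * s0) * sin (pi * s1)) * sin (pi * (s0 + s1))" by simp
  have "0 < sin (pi * s0)" "0 < sin (pi * s1)" using s0 s1 sin_pi_pos by auto
  then have "0 < 4 * sin (pi * s0) * sin (pi * s1)" by simp
  then have "0 < sin (pi * (s0 + s1))" using sv e zero_less_mult_pos by metis
  then have s01: "s0 + s1 < 1" using sin_pi_sum_pos_lt1[of "s0 + s1"] s0 s1 by simp
  obtain k :: int where "t0 + s0 + s1 + s2 - t0 = k" using circ_eq_int[of "t0 + s0 + s1 + s2" t0] s2(3) t0 by auto
  then have k: "s0 + s1 + s2 = k" by simp
  have "0 < real_of_int k" "real_of_int k < 2" using k s0 s1 s2 s01 by linarith+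
  then have "0 < k" "k < 2" by simp_all
  then have "k = 1" by arith
  then have sum1: "s0 + s1 + s2 = 1" using k by simp
  have c1: "side v1 v2 v0 = sv" "side v2 v0 v1 = sv" unfolding sv_def by (metis side_cyc)+
  have sv0: "sv \<ge> 0" using sv by simp
  have L0: "\<forall>p\<in>T. side v0 v1 p \<ge> 0"
  proof -
    have "side v0 v1 A1 = l1 * sv" unfolding l1(3) side_seg sv_def by (simp add: side_def algebra_simps)
    moreover have "side v0 v1 A2 = (1 - l2) * sv" unfolding l2(3) side_seg sv_def by (simp add: side_def algebra_simps)
    ultimately show ?thesis unfolding T_def using z0 hull_side_nonneg[of v0 v1 A0 A1 A2] l1 l2 sv0 by simp
  qed
  have L1: "\<forall>p\<in>T. side v1 v2 p \<ge> 0"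
  proof -
    have "side v1 v2 A2 = l2 * sv" unfolding l2(3) side_seg c1(1)[symmetric] by (simp add: side_def algebra_simps)
    moreover have "side v1 v2 A0 = (1 - l0) * sv" unfolding l0(3) side_seg c1(1)[symmetric] by (simp add: side_def algebra_simps)
    ultimately show ?thesis unfolding T_def using z1 hull_side_nonneg[of v1 v2 A0 A1 A2] l0 l2 sv0 by simp
  qed
  have L2: "\<forall>p\<in>T. side v2 v0 p \<ge> 0"
  proof -
    have "side v2 v0 A0 = l0 * sv" unfolding l0(3) side_seg c1(2)[symmetric] by (simp add: side_def algebra_simps)
    moreover have "side v2 v0 A1 = (1 - l1) * sv" unfolding l1(3) side_seg c1(2)[symmetric] by (simp add: side_def algebra_simps)
    ultimately show ?thesis unfolding T_def using z2 hull_side_nonneg[of v2 v0 A0 A1 A2] l0 l1 sv0 by simp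
  qed
  have A0T: "A0 \<in> T" unfolding T_def by (rule hull_inc) simp
  have A1T: "A1 \<in> T" unfolding T_def by (rule hull_inc) simp
  have A2T: "A2 \<in> T" unfolding T_def by (rule hull_inc) simp
  have g0: "psi_gap T t0 = s0"
    by (rule psi_gap_eq[OF TD s0(1,2)]) (use L0 z0 A0T t0 s0(3) in auto)
  have g1: "psi_gap T (t0 + s0) = s1"
    by (rule psi_gap_eq[OF TD s1(1,2)]) (use L1 z1 A1T s0(3) s1(3) in auto)
  have g2: "psi_gap T (t0 + s0 + s1) = s2"
    by (rule psi_gap_eq[OF TD s2(1,2)]) (use L2 z2 A2T s1(3) s2(3) in auto)
  have "(psi_lift T ^^ 3) t0 = psi_lift T (psi_lift T (psi_lift T t0))"
    by (simp add: numeral_3_eq_3)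
  also have "\<dots> = t0 + s0 + s1 + s2" by (simp add: psi_lift_def g0 g1 g2)
  also have "\<dots> = t0 + 1" using sum1 by simp
  finally show ?thesis unfolding T_def by blast
qed


lemma amgm3:
  fixes a b c :: real
  assumes "0 \<le> a" "0 \<le> b" "0 \<le> c"
  shows "27 * (a * b * c) \<le> (a + b + c)^3"
proof -
  have e: "2 * ((a + b + c)^3 - 27 * (a * b * c)) =
      (a + b + c) * ((a - b)^2 + (b - c)^2 + (c - a)^2) + 6 * (a * (b - c)^2 + b * (c - a)^2 + c * (a - b)^2)"
    by (simp add: power2_eq_square power3_eq_cube algebra_simps)
  have P: "0 \<le> (a + b + c) * ((a - b)^2 + (b - c)^2 + (c - a)^2)" using assms by simp
  have Q: "0 \<le> a * (b - c)^2 + b * (c - a)^2 + c * (a - b)^2" using assms by simp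
  have "0 \<le> 2 * ((a + b + c)^3 - 27 * (a * b * c))" unfolding e using P Q by simp
  then show ?thesis by simp
qed

lemma equi_area_sq:
  assumes "(cmod (A1 - A0))^2 = 3/4" "(cmod (A2 - A1))^2 = 3/4" "(cmod (A0 - A2))^2 = 3/4"
  shows "(side A0 A1 A2)^2 = 27/64"
proof -
  define x1 where "x1 = Re A1 - Re A0"
  define y1 where "y1 = Im A1 - Im A0"
  define x2 where "x2 = Re A2 - Re A0"
  define y2 where "y2 = Im A2 - Im A0"
  have h1: "x1^2 + y1^2 = 3/4" using assms(1) by (simp add: cmod_sq x1_def y1_def)
  have h2: "x2^2 + y2^2 = 3/4" using assms(3) by (simp add: cmod_sq x2_def y2_def power2_commute)
  have h3: "(x2 - x1)^2 + (y2 - y1)^2 = 3/4" using assms(2) by (simp add: cmod_sq x1_def y1_def x2_def y2_def)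
  have s: "side A0 A1 A2 = x1 * y2 - y1 * x2" by (simp add: side_def x1_def y1_def x2_def y2_def algebra_simps)
  have dot: "x1 * x2 + y1 * y2 = 3/8"
    using h1 h2 h3 by (simp add: power2_eq_square algebra_simps) 
  have "(x1 * y2 - y1 * x2)^2 = (x1^2 + y1^2) * (x2^2 + y2^2) - (x1 * x2 + y1 * y2)^2"
    by (simp add: power2_eq_square algebra_simps)
  moreover have "(x1^2 + y1^2) * (x2^2 + y2^2) = 9/16" by (subst h1, subst h2) simp
  moreover have "(x1 * x2 + y1 * y2)^2 = 9/64" by (subst dot) (simp add: power2_eq_square)
  ultimately show ?thesis using s by simp
qed

lemma sumsq_bound:
  assumes "(cmod (A1 - A0))^2 = 3/4" "(cmod (A2 - A1))^2 = 3/4" "(cmod (A0 - A2))^2 = 3/4"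
  shows "(cmod A0)^2 + (cmod A1)^2 + (cmod A2)^2 \<ge> 3/4"
proof -
  have e: "3 * ((cmod A0)^2 + (cmod A1)^2 + (cmod A2)^2) =
     (cmod (A0 + A1 + A2))^2 + (cmod (A1 - A0))^2 + (cmod (A2 - A1))^2 + (cmod (A0 - A2))^2"
  proof -
    have g: "\<And>x0 y0 x1 y1 x2 y2 :: real. 3 * ((x0^2 + y0^2) + (x1^2 + y1^2) + (x2^2 + y2^2)) =
      ((x0+x1+x2)^2 + (y0+y1+y2)^2) + ((x1-x0)^2 + (y1-y0)^2) + ((x2-x1)^2+(y2-y1)^2) + ((x0-x2)^2+(y0-y2)^2)"
      by (simp add: power2_eq_square algebra_simps)
    show ?thesis unfolding cmod_sq using g[of "Re A0" "Im A0" "Re A1" "Im A1" "Re A2" "Im A2"] by simp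
  qed
  have "(cmod (A0 + A1 + A2))^2 \<ge> 0" by simp
  then have "3 * ((cmod A0)^2 + (cmod A1)^2 + (cmod A2)^2) \<ge> 9/4" unfolding e assms by simp
  then show ?thesis by simp
qed

lemma ineq_equi:
  assumes A: "norm A0 < 1" "norm A1 < 1" "norm A2 < 1"
    and E: "(cmod (A1 - A0))^2 = 3/4" "(cmod (A2 - A1))^2 = 3/4" "(cmod (A0 - A2))^2 = 3/4"
  shows "(1 - (cmod A0)^2) * (1 - (cmod A1)^2) * (1 - (cmod A2)^2) \<le> (side A0 A1 A2)^2"
proof -
  define y0 where "y0 = 1 - (cmod A0)^2"
  define y1 where "y1 = 1 - (cmod A1)^2"
  define y2 where "y2 = 1 - (cmod A2)^2"
  have y: "0 \<le> y0" "0 \<le> y1" "0 \<le> y2" using A by (simp_all add: y0_def y1_def y2_def power_le_one)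
  have sy: "y0 + y1 + y2 \<le> 9/4" using sumsq_bound[OF E] by (simp add: y0_def y1_def y2_def)
  have "27 * (y0 * y1 * y2) \<le> (y0 + y1 + y2)^3" by (rule amgm3[OF y])
  also have "\<dots> \<le> (9/4)^3" using sy y by (intro power_mono) auto
  also have "(9/4::real)^3 = 729/64" by (simp add: power3_eq_cube)
  finally have "y0 * y1 * y2 \<le> 27/64" by simp
  then show ?thesis using equi_area_sq[OF E] by (simp add: y0_def y1_def y2_def)
qed

theorem positive_dir:
  assumes A: "norm A0 < 1" "norm A1 < 1" "norm A2 < 1"
    and E: "(cmod (A1 - A0))^2 = 3/4" "(cmod (A2 - A1))^2 = 3/4" "(cmod (A0 - A2))^2 = 3/4"
  shows "has_rotation_number (convex hull {A0,A1,A2}) (1/3)"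
proof -
  have S2: "(side A0 A1 A2)^2 = 27/64" by (rule equi_area_sq[OF E])
  have I: "(1 - (cmod A0)^2) * (1 - (cmod A1)^2) * (1 - (cmod A2)^2) \<le> (side A0 A1 A2)^2"
    by (rule ineq_equi[OF A E])
  have "\<exists>t0. (psi_lift (convex hull {A0,A1,A2}) ^^ 3) t0 = t0 + 1"
  proof (cases "side A0 A1 A2 > 0")
    case True
    show ?thesis by (rule exact_orbit[OF A True I])
  next
    case False
    have ne: "side A0 A1 A2 \<noteq> 0" using S2 by auto
    have sw: "side A0 A2 A1 = - side A0 A1 A2" by (rule side_swap)
    then have pos: "side A0 A2 A1 > 0" using False ne by simp
    have sq: "(side A0 A2 A1)^2 = (side A0 A1 A2)^2" using sw by simp
    have pr: "(1 - (cmod A0)^2) * (1 - (cmod A2)^2) * (1 - (cmod A1)^2) = (1 - (cmod A0)^2) * (1 - (cmod A1)^2) * (1 - (cmod A2)^2)"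
      by (simp only: mult_ac)
    have I': "(1 - (cmod A0)^2) * (1 - (cmod A2)^2) * (1 - (cmod A1)^2) \<le> (side A0 A2 A1)^2"
      unfolding sq pr by (rule I)
    have st: "{A0,A2,A1} = {A0,A1,A2}" by auto
    obtain t0 where "(psi_lift (convex hull {A0,A2,A1}) ^^ 3) t0 = t0 + 1"
      using exact_orbit[OF A(1) A(3) A(2) pos I'] by blast
    then have "(psi_lift (convex hull {A0,A1,A2}) ^^ 3) t0 = t0 + 1" unfolding st .
    then show ?thesis by blast
  qed
  then obtain t0 where t0: "(psi_lift (convex hull {A0,A1,A2}) ^^ 3) t0 = t0 + 1" by blast
  interpret liftmap "psi_lift (convex hull {A0,A1,A2})" by (rule psi_liftmap[OF A])
  show ?thesis unfolding has_rotation_number_def by (rule rot_exact[OF t0])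
qed


lemma hull_diam:
  fixes A B C :: complex
  assumes "\<forall>V\<in>{A,B,C}. \<forall>W\<in>{A,B,C}. dist V W \<le> m"
    and x: "x \<in> convex hull {A,B,C}" and y: "y \<in> convex hull {A,B,C}"
  shows "dist x y \<le> m"
proof -
  have "convex hull {A,B,C} \<subseteq> cball V m" if "V \<in> {A,B,C}" for V
    using assms(1) that by (intro hull_minimal) (auto simp: convex_cball)
  then have "\<forall>V\<in>{A,B,C}. dist V y \<le> m" using y by (auto simp: subset_iff)
  then have "convex hull {A,B,C} \<subseteq> cball y m"
    by (intro hull_minimal) (auto simp: convex_cball dist_commute)
  then show ?thesis using x by (auto simp: dist_commute)
qed

lemma var_real:
  fixes u v w a b c yy :: real
  assumes "u + v + w = 1"
  shows "u * (a - yy)^2 + v * (b - yy)^2 + w * (c - yy)^2 =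
    ((u * a + v * b + w * c) - yy)^2 + u * (a - (u * a + v * b + w * c))^2 + v * (b - (u * a + v * b + w * c))^2 + w * (c - (u * a + v * b + w * c))^2"
proof -
  have w: "w = 1 - u - v" using assms by simp
  show ?thesis unfolding w by (simp add: power2_eq_square algebra_simps)
qed

lemma hull_extreme:
  fixes A B C :: complex
  assumes diam: "\<forall>p\<in>convex hull {A,B,C}. \<forall>q\<in>convex hull {A,B,C}. dist p q \<le> m"
    and x: "x \<in> convex hull {A,B,C}" and y: "y \<in> convex hull {A,B,C}" and xy: "dist x y = m"
  shows "x \<in> {A,B,C}"
proof -
  obtain u v w where uvw: "0 \<le> u" "0 \<le> v" "0 \<le> w" "u + v + w = 1"
    and xe: "x = u *\<^sub>R A + v *\<^sub>R B + w *\<^sub>R C" using x unfolding convex_hull_3 by blast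
  have Re_x: "Re x = u * Re A + v * Re B + w * Re C" and Im_x: "Im x = u * Im A + v * Im B + w * Im C"
    by (simp_all add: xe)
  have r: "u * (Re A - Re y)^2 + v * (Re B - Re y)^2 + w * (Re C - Re y)^2 =
     (Re x - Re y)^2 + u * (Re A - Re x)^2 + v * (Re B - Re x)^2 + w * (Re C - Re x)^2"
    unfolding Re_x by (rule var_real[OF uvw(4)])
  have i: "u * (Im A - Im y)^2 + v * (Im B - Im y)^2 + w * (Im C - Im y)^2 =
     (Im x - Im y)^2 + u * (Im A - Im x)^2 + v * (Im B - Im x)^2 + w * (Im C - Im x)^2"
    unfolding Im_x by (rule var_real[OF uvw(4)])
  have id: "u * (cmod (A - y))^2 + v * (cmod (B - y))^2 + w * (cmod (C - y))^2 =
     (cmod (x - y))^2 + u * (cmod (A - x))^2 + v * (cmod (B - x))^2 + w * (cmod (C - x))^2"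
    unfolding cmod_sq using r i by (simp add: distrib_left)
  have vh: "A \<in> convex hull {A,B,C}" "B \<in> convex hull {A,B,C}" "C \<in> convex hull {A,B,C}"
    by (rule hull_inc, simp)+
  have m0: "0 \<le> m" using xy by auto
  have dA: "(cmod (A - y))^2 \<le> m^2" using diam vh y m0 by (simp add: dist_norm power_mono)
  have dB: "(cmod (B - y))^2 \<le> m^2" using diam vh y m0 by (simp add: dist_norm power_mono)
  have dC: "(cmod (C - y))^2 \<le> m^2" using diam vh y m0 by (simp add: dist_norm power_mono)
  have "u * (cmod (A - y))^2 + v * (cmod (B - y))^2 + w * (cmod (C - y))^2 \<le> u * m^2 + v * m^2 + w * m^2"
    using dA dB dC uvw by (intro add_mono mult_left_mono) auto
  also have "\<dots> = m^2" using uvw(4) by (simp add: algebra_simps) (metis distrib_right mult_1)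
  also have "\<dots> = (cmod (x - y))^2" using xy by (simp add: dist_norm)
  finally have le0: "u * (cmod (A - x))^2 + v * (cmod (B - x))^2 + w * (cmod (C - x))^2 \<le> 0"
    using id by linarith
  have t: "0 \<le> u * (cmod (A - x))^2" "0 \<le> v * (cmod (B - x))^2" "0 \<le> w * (cmod (C - x))^2"
    using uvw by simp_all
  then have z: "u * (cmod (A - x))^2 = 0" "v * (cmod (B - x))^2 = 0" "w * (cmod (C - x))^2 = 0"
    using le0 by linarith+
  show ?thesis
  proof (cases "u = 0")
    case False then have "A = x" using z(1) by simp
    then show ?thesis by simp
  next
    case u: True
    show ?thesis
    proof (cases "v = 0")
      case False then have "B = x" using z(2) by simp
      then show ?thesis by simp
    next
      case True
      then have "w \<noteq> 0" using u uvw(4) by simp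
      then have "C = x" using z(3) by simp
      then show ?thesis by simp
    qed
  qed
qed


lemma rigid:
  fixes A B C P Q R :: complex and f :: "complex \<Rightarrow> complex"
  assumes c: "c > 0" and f: "\<forall>x y. dist (f x) (f y) = c * dist x y"
    and img: "f ` (convex hull {A,B,C}) = convex hull {P,Q,R}"
    and E: "dist P Q = L" "dist Q R = L" "dist R P = L" and L: "L > 0"
  shows "dist A B = L / c \<and> dist B C = L / c \<and> dist C A = L / c"
proof -
  define m where "m = L / c"
  have m: "m > 0" using c L by (simp add: m_def)
  have dPQR: "\<forall>V\<in>{P,Q,R}. \<forall>W\<in>{P,Q,R}. dist V W \<le> L"
    using E L by (auto simp: dist_commute)
  have diam: "\<forall>p\<in>convex hull {A,B,C}. \<forall>q\<in>convex hull {A,B,C}. dist p q \<le> m"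
  proof (intro ballI)
    fix p q assume p: "p \<in> convex hull {A,B,C}" and q: "q \<in> convex hull {A,B,C}"
    have "f p \<in> convex hull {P,Q,R}" "f q \<in> convex hull {P,Q,R}" using p q img by blast+
    then have "dist (f p) (f q) \<le> L" using hull_diam[OF dPQR] by blast
    then have "c * dist p q \<le> L" using f by simp
    then show "dist p q \<le> m" using c by (simp add: m_def field_simps)
  qed
  have PQRin: "P \<in> convex hull {P,Q,R}" "Q \<in> convex hull {P,Q,R}" "R \<in> convex hull {P,Q,R}"
    by (rule hull_inc, simp)+
  obtain aP where aP: "aP \<in> convex hull {A,B,C}" "f aP = P" using PQRin(1) img by (metis imageE)
  obtain aQ where aQ: "aQ \<in> convex hull {A,B,C}" "f aQ = Q" using PQRin(2) img by (metis imageE)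
  obtain aR where aR: "aR \<in> convex hull {A,B,C}" "f aR = R" using PQRin(3) img by (metis imageE)
  have "dist P Q = c * dist aP aQ" "dist Q R = c * dist aQ aR" "dist R P = c * dist aR aP"
    using f aP(2) aQ(2) aR(2) by metis+
  then have "c * dist aP aQ = L" "c * dist aQ aR = L" "c * dist aR aP = L"
    using E by linarith+
  then have dd: "dist aP aQ = m" "dist aQ aR = m" "dist aR aP = m"
    using c by (simp_all add: m_def field_simps)
  have vP: "aP \<in> {A,B,C}" by (rule hull_extreme[OF diam aP(1) aQ(1) dd(1)])
  have vQ: "aQ \<in> {A,B,C}" by (rule hull_extreme[OF diam aQ(1) aR(1) dd(2)])
  have vR: "aR \<in> {A,B,C}" by (rule hull_extreme[OF diam aR(1) aP(1) dd(3)])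
  have ne: "aP \<noteq> aQ" "aQ \<noteq> aR" "aR \<noteq> aP" using dd m by auto
  have pair: "\<And>x y. x \<in> {aP,aQ,aR} \<Longrightarrow> y \<in> {aP,aQ,aR} \<Longrightarrow> x \<noteq> y \<Longrightarrow> dist x y = m"
    using dd by (auto simp: dist_commute)
  have inA: "A \<in> {aP,aQ,aR}" using vP vQ vR ne by auto
  have inB: "B \<in> {aP,aQ,aR}" using vP vQ vR ne by auto
  have inC: "C \<in> {aP,aQ,aR}" using vP vQ vR ne by auto
  have AB: "A \<noteq> B" using vP vQ vR ne by auto
  have BC: "B \<noteq> C" using vP vQ vR ne by auto
  have CA: "C \<noteq> A" using vP vQ vR ne by auto
  show ?thesis using pair[OF inA inB AB] pair[OF inB inC BC] pair[OF inC inA CA] by (simp add: m_def)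
qed


lemma dist_sq: "(dist x y)^2 = (Re x - Re y)^2 + (Im x - Im y)^2"
  by (simp add: dist_norm cmod_sq)

lemma centroid_sq:
  fixes P Q R :: complex
  shows "9 * (dist P ((P + Q + R) / 3))^2 = 2 * (dist P Q)^2 + 2 * (dist P R)^2 - (dist Q R)^2"
proof -
  have g: "\<And>a b c :: real. 9 * (a - (a + b + c) / 3)^2 = 2 * (a - b)^2 + 2 * (a - c)^2 - (b - c)^2"
  proof -
    fix a b c :: real
    have "a - (a + b + c) / 3 = (2 * a - b - c) / 3" by (simp add: field_simps)
    then have "9 * (a - (a + b + c) / 3)^2 = 9 * ((2 * a - b - c) / 3)^2" by (simp only:)
    also have "\<dots> = (2 * a - b - c)^2" by (simp add: power_divide)
    finally have "9 * (a - (a + b + c) / 3)^2 = (2 * a - b - c)^2" .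
    then show "9 * (a - (a + b + c) / 3)^2 = 2 * (a - b)^2 + 2 * (a - c)^2 - (b - c)^2"
      by (simp add: power2_eq_square algebra_simps)
  qed
  show ?thesis unfolding dist_sq using g[of "Re P" "Re Q" "Re R"] g[of "Im P" "Im Q" "Im R"]
    by simp
qed

lemma equi_side_sq:
  assumes "dist P Q = L" "dist Q R = L" "dist R P = L"
  shows "(side P Q R)^2 = 3/4 * L^4"
proof -
  define x1 where "x1 = Re Q - Re P"
  define y1 where "y1 = Im Q - Im P"
  define x2 where "x2 = Re R - Re P"
  define y2 where "y2 = Im R - Im P"
  have h1: "x1^2 + y1^2 = L^2" using assms(1) dist_sq[of P Q] by (simp add: x1_def y1_def power2_commute)
  have h2: "x2^2 + y2^2 = L^2" using assms(3) dist_sq[of R P] by (simp add: x2_def y2_def)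
  have h3: "(x2 - x1)^2 + (y2 - y1)^2 = L^2" using assms(2) dist_sq[of Q R]
    by (simp add: x1_def y1_def x2_def y2_def power2_commute)
  have s: "side P Q R = x1 * y2 - y1 * x2" by (simp add: side_def x1_def y1_def x2_def y2_def algebra_simps)
  have dot: "x1 * x2 + y1 * y2 = L^2 / 2"
    using h1 h2 h3 by (simp add: power2_eq_square algebra_simps)
  have "(x1 * y2 - y1 * x2)^2 = (x1^2 + y1^2) * (x2^2 + y2^2) - (x1 * x2 + y1 * y2)^2"
    by (simp add: power2_eq_square algebra_simps)
  also have "\<dots> = L^2 * L^2 - (L^2/2)^2" by (subst h1, subst h2, subst dot) (rule refl)
  also have "\<dots> = 3/4 * L^4" by (simp add: power2_eq_square power4_eq_xxxx field_simps)
  finally show ?thesis using s by simp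
qed

lemma collinear_side: "collinear {P, Q, R} \<Longrightarrow> side P Q R = 0"
proof -
  assume "collinear {P, Q, R}"
  then obtain u where u: "\<forall>x\<in>{P,Q,R}. \<forall>y\<in>{P,Q,R}. \<exists>c. x - y = c *\<^sub>R u"
    unfolding collinear_def by blast
  obtain c1 where c1: "Q - P = c1 *\<^sub>R u" using u by blast
  obtain c2 where c2: "R - P = c2 *\<^sub>R u" using u by blast
  have "side P Q R = Im (cnj (c1 *\<^sub>R u) * (c2 *\<^sub>R u))" by (simp add: side_def c1[symmetric] c2[symmetric])
  also have "\<dots> = 0" by (simp add: scaleR_conv_of_real algebra_simps)
  finally show ?thesis .
qed

lemma equi_nondeg:
  assumes "dist P Q = L" "dist Q R = L" "dist R P = L" "L > 0"
  shows "nondegenerate P Q R"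
proof -
  have "(side P Q R)^2 = 3/4 * L^4" by (rule equi_side_sq[OF assms(1-3)])
  then have "side P Q R \<noteq> 0" using assms(4) by auto
  then show ?thesis unfolding nondegenerate_def using collinear_side by blast
qed

lemma inner_law:
  fixes P Q R :: complex
  shows "(Q - P) \<bullet> (R - P) = ((dist P Q)^2 + (dist R P)^2 - (dist Q R)^2) / 2"
proof -
  have g: "\<And>a b c :: real. (b - a) * (c - a) = ((a - b)^2 + (c - a)^2 - (b - c)^2) / 2"
    by (simp add: power2_eq_square algebra_simps)
  have e: "Re (Q - P) * Re (R - P) + Im (Q - P) * Im (R - P) = (Re Q - Re P)*(Re R - Re P) + (Im Q - Im P)*(Im R - Im P)"
    by simp
  show ?thesis unfolding dist_sq inner_complex_def e
    unfolding g[where a="Re P" and b="Re Q" and c="Re R"] g[where a="Im P" and b="Im Q" and c="Im R"]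
    by (simp add: field_simps)
qed

lemma equi_acute:
  assumes "dist P Q = L" "dist Q R = L" "dist R P = L" "L > 0"
  shows "acute P Q R"
proof -
  have i1: "(Q - P) \<bullet> (R - P) = L^2 / 2" using inner_law[where P=P and Q=Q and R=R] assms by simp
  have i2: "(P - Q) \<bullet> (R - Q) = L^2 / 2" using inner_law[where P=Q and Q=P and R=R] assms by (simp add: dist_commute)
  have i3: "(P - R) \<bullet> (Q - R) = L^2 / 2" using inner_law[where P=R and Q=P and R=Q] assms by (simp add: dist_commute)
  show ?thesis unfolding acute_def i1 i2 i3 using assms(4) by simp
qed

lemma equi_circumradius:
  assumes E: "dist P Q = L" "dist Q R = L" "dist R P = L" and L: "L > 0"
  shows "circumradius P Q R = L / sqrt 3"
proof -
  define g where "g = (P + Q + R) / 3"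
  have gd: "\<And>X. X \<in> {P,Q,R} \<Longrightarrow> (dist X g)^2 = L^2 / 3"
  proof -
    fix X assume "X \<in> {P,Q,R}"
    moreover have "9 * (dist P g)^2 = 3 * L^2" using centroid_sq[of P Q R] E by (simp add: g_def dist_commute)
    moreover have "9 * (dist Q g)^2 = 3 * L^2" using centroid_sq[of Q R P] E by (simp add: g_def dist_commute add_ac)
    moreover have "9 * (dist R g)^2 = 3 * L^2" using centroid_sq[of R P Q] E by (simp add: g_def dist_commute add_ac)
    ultimately show "(dist X g)^2 = L^2 / 3" by auto
  qed
  have sq3: "(L / sqrt 3)^2 = L^2 / 3" by (simp add: power_divide)
  have rg: "\<And>X. X \<in> {P,Q,R} \<Longrightarrow> dist g X = L / sqrt 3"
  proof -
    fix X assume "X \<in> {P,Q,R}"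
    then have "(dist g X)^2 = L^2 / 3" using gd by (simp add: dist_commute)
    then have "(dist g X)^2 = (L / sqrt 3)^2" unfolding sq3 .
    then show "dist g X = L / sqrt 3" using L by (simp add: power2_eq_iff_nonneg)
  qed
  have S: "side P Q R \<noteq> 0" using equi_side_sq[OF E] L by auto
  have uniq: "r = L / sqrt 3" if C: "dist C P = r" "dist C Q = r" "dist C R = r" for C r
  proof -
    define dx where "dx = Re C - Re g"
    define dy where "dy = Im C - Im g"
    define a1 where "a1 = Re Q - Re P"
    define a2 where "a2 = Im Q - Im P"
    define b1 where "b1 = Re R - Re P"
    define b2 where "b2 = Im R - Im P"
    have e1: "(Re C - Re P)^2 + (Im C - Im P)^2 = (Re C - Re Q)^2 + (Im C - Im Q)^2"
      using C dist_sq[of C P] dist_sq[of C Q] by simp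
    have e2: "(Re C - Re P)^2 + (Im C - Im P)^2 = (Re C - Re R)^2 + (Im C - Im R)^2"
      using C dist_sq[of C P] dist_sq[of C R] by simp
    have f1: "(Re g - Re P)^2 + (Im g - Im P)^2 = (Re g - Re Q)^2 + (Im g - Im Q)^2"
      using rg[of P] rg[of Q] dist_sq[of g P] dist_sq[of g Q] by simp
    have f2: "(Re g - Re P)^2 + (Im g - Im P)^2 = (Re g - Re R)^2 + (Im g - Im R)^2"
      using rg[of P] rg[of R] dist_sq[of g P] dist_sq[of g R] by simp
    have l1: "dx * a1 + dy * a2 = 0"
      using e1 f1 unfolding dx_def dy_def a1_def a2_def by algebra
    have l2: "dx * b1 + dy * b2 = 0"
      using e2 f2 unfolding dx_def dy_def b1_def b2_def by algebra
    have sd: "side P Q R = a1 * b2 - a2 * b1"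
      by (simp add: side_def a1_def a2_def b1_def b2_def algebra_simps)
    have "dx * (a1 * b2 - a2 * b1) = 0" using l1 l2 by algebra
    then have dx0: "dx = 0" using S sd by simp
    have "dy * (a1 * b2 - a2 * b1) = 0" using l1 l2 by algebra
    then have dy0: "dy = 0" using S sd by simp
    have "C = g" using dx0 dy0 by (simp add: dx_def dy_def complex_eq_iff)
    then show ?thesis using C rg[of P] by simp
  qed
  show ?thesis unfolding circumradius_def
  proof (rule the_equality)
    show "\<exists>C. dist C P = L / sqrt 3 \<and> dist C Q = L / sqrt 3 \<and> dist C R = L / sqrt 3"
      using rg by blast
  next
    fix r assume "\<exists>C. dist C P = r \<and> dist C Q = r \<and> dist C R = r"
    then show "r = L / sqrt 3" using uniq by blast
  qed
qed

lemma equi_kappa: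
  assumes E: "dist P Q = L" "dist Q R = L" "dist R P = L" and L: "L > 0"
  shows "kappa P Q R = L / sqrt 3"
  using equi_acute[OF E L] equi_circumradius[OF E L] by (simp add: kappa_def)

lemma equi_centroid_norm:
  assumes E: "dist P Q = L" "dist Q R = L" "dist R P = L" and L: "L > 0"
  shows "cmod (P - (P + Q + R) / 3) = L / sqrt 3" "cmod (Q - (P + Q + R) / 3) = L / sqrt 3"
    "cmod (R - (P + Q + R) / 3) = L / sqrt 3"
proof -
  have sq3: "(L / sqrt 3)^2 = L^2 / 3" by (simp add: power_divide)
  have "9 * (dist P ((P + Q + R) / 3))^2 = 3 * L^2" using centroid_sq[of P Q R] E by (simp add: dist_commute)
  then have "(cmod (P - (P + Q + R) / 3))^2 = (L / sqrt 3)^2" using sq3 by (simp add: dist_norm)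
  then show "cmod (P - (P + Q + R) / 3) = L / sqrt 3" using L by (simp add: power2_eq_iff_nonneg)
  have "9 * (dist Q ((Q + R + P) / 3))^2 = 3 * L^2" using centroid_sq[of Q R P] E by (simp add: dist_commute)
  then have "(cmod (Q - (P + Q + R) / 3))^2 = (L / sqrt 3)^2" using sq3 by (simp add: dist_norm add_ac)
  then show "cmod (Q - (P + Q + R) / 3) = L / sqrt 3" using L by (simp add: power2_eq_iff_nonneg)
  have "9 * (dist R ((R + P + Q) / 3))^2 = 3 * L^2" using centroid_sq[of R P Q] E by (simp add: dist_commute)
  then have "(cmod (R - (P + Q + R) / 3))^2 = (L / sqrt 3)^2" using sq3 by (simp add: dist_norm add_ac)
  then show "cmod (R - (P + Q + R) / 3) = L / sqrt 3" using L by (simp add: power2_eq_iff_nonneg)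
qed


lemma dist_transl: fixes x y g :: complex shows "dist (x - g) (y - g) = dist x y"
  by (simp add: dist_norm)

lemma lower_bound_elem:
  assumes E: "dist P Q = L" "dist Q R = L" "dist R P = L" and L: "L > 0"
    and nd: "nondegenerate P' Q' R'"
    and sim: "similar_tri (tri P' Q' R') (tri P Q R)"
    and univ: "\<forall>P'' Q'' R''. nondegenerate P'' Q'' R'' \<and> tri P'' Q'' R'' \<subseteq> unit_disk \<and>
         congruent_tri (tri P'' Q'' R'') (tri P' Q' R') \<longrightarrow>
         has_rotation_number (tri P'' Q'' R'') (1/3)"
  shows "1/2 \<le> kappa P' Q' R'"
proof -
  obtain c f where c: "c > 0" and f: "\<forall>x y. dist (f x) (f y) = c * dist x y"
    and img: "f ` (convex hull {P',Q',R'}) = convex hull {P,Q,R}"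
    using sim unfolding similar_tri_def tri_def by blast
  define m where "m = L / c"
  have m: "m > 0" using L c by (simp add: m_def)
  have E': "dist P' Q' = m" "dist Q' R' = m" "dist R' P' = m"
    using rigid[OF c f img E L] by (simp_all add: m_def)
  have k: "kappa P' Q' R' = m / sqrt 3" by (rule equi_kappa[OF E' m])
  show ?thesis
  proof (rule ccontr)
    assume "\<not> 1/2 \<le> kappa P' Q' R'"
    then have r: "m / sqrt 3 < 1/2" using k by simp
    define g where "g = (P' + Q' + R') / 3"
    have nrm: "cmod (P' - g) = m / sqrt 3" "cmod (Q' - g) = m / sqrt 3" "cmod (R' - g) = m / sqrt 3"
      using equi_centroid_norm[OF E' m] by (simp_all add: g_def)
    have E'': "dist (P' - g) (Q' - g) = m" "dist (Q' - g) (R' - g) = m" "dist (R' - g) (P' - g) = m"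
      using E' by (simp_all add: dist_transl)
    have nd'': "nondegenerate (P' - g) (Q' - g) (R' - g)" by (rule equi_nondeg[OF E'' m])
    have "tri (P' - g) (Q' - g) (R' - g) \<subseteq> unit_disk"
    proof -
      have "m / sqrt 3 < 1" using r m by simp
      then show ?thesis unfolding tri_def unit_disk_def using nrm by (intro hull_ball) simp_all
    qed
    moreover have "congruent_tri (tri (P' - g) (Q' - g) (R' - g)) (tri P' Q' R')"
    proof -
      have "(\<lambda>x. g + x) ` {P' - g, Q' - g, R' - g} = {P', Q', R'}" by auto
      then have "(\<lambda>x. g + x) ` (convex hull {P' - g, Q' - g, R' - g}) = convex hull {P', Q', R'}"
        using convex_hull_translation[of g "{P' - g, Q' - g, R' - g}"] by simp
      moreover have "\<forall>x y. dist (g + x) (g + y) = dist x y" by (simp add: dist_norm)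
      ultimately show ?thesis unfolding congruent_tri_def tri_def by blast
    qed
    ultimately have "has_rotation_number (tri (P' - g) (Q' - g) (R' - g)) (1/3)"
      using univ nd'' by blast
    moreover have "\<not> has_rotation_number (convex hull {P' - g, Q' - g, R' - g}) (1/3)"
      by (rule negative_dir[of _ "m / sqrt 3"]) (use nrm r in simp_all)
    ultimately show False by (simp add: tri_def)
  qed
qed

lemma half_in:
  assumes E: "dist P Q = L" "dist Q R = L" "dist R P = L" and L: "L > 0"
  shows "\<exists>P' Q' R'. kappa P' Q' R' = 1/2 \<and> nondegenerate P' Q' R' \<and> tri P' Q' R' \<subseteq> unit_disk \<and>
      similar_tri (tri P' Q' R') (tri P Q R) \<and>
      (\<forall>P'' Q'' R''. nondegenerate P'' Q'' R'' \<and> tri P'' Q'' R'' \<subseteq> unit_disk \<and>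
         congruent_tri (tri P'' Q'' R'') (tri P' Q' R') \<longrightarrow>
         has_rotation_number (tri P'' Q'' R'') (1/3))"
proof -
  define g where "g = (P + Q + R) / 3"
  define k where "k = sqrt 3 / (2 * L)"
  have k: "k > 0" using L by (simp add: k_def)
  define m0 where "m0 = sqrt 3 / 2"
  have m0: "m0 > 0" by (simp add: m0_def)
  define P' where "P' = k *\<^sub>R (P - g)"
  define Q' where "Q' = k *\<^sub>R (Q - g)"
  define R' where "R' = k *\<^sub>R (R - g)"
  have dsc: "dist (k *\<^sub>R (x - g)) (k *\<^sub>R (y - g)) = k * dist x y" for x y
  proof -
    have "k *\<^sub>R (x - g) - k *\<^sub>R (y - g) = k *\<^sub>R (x - y)" by (simp add: algebra_simps)
    then show ?thesis using k by (simp add: dist_norm)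
  qed
  have kL: "k * L = m0" using L by (simp add: k_def m0_def)
  have E': "dist P' Q' = m0" "dist Q' R' = m0" "dist R' P' = m0"
    using E kL by (simp_all add: P'_def Q'_def R'_def dsc)
  have kap: "kappa P' Q' R' = 1/2"
    using equi_kappa[OF E' m0] by (simp add: m0_def)
  have nd: "nondegenerate P' Q' R'" by (rule equi_nondeg[OF E' m0])
  have nrm0: "cmod (P - g) = L / sqrt 3" "cmod (Q - g) = L / sqrt 3" "cmod (R - g) = L / sqrt 3"
    using equi_centroid_norm[OF E L] by (simp_all add: g_def)
  have kk: "k * (L / sqrt 3) = 1/2" using L by (simp add: k_def)
  have nrm: "cmod P' = 1/2" "cmod Q' = 1/2" "cmod R' = 1/2"
    using nrm0 k kk L by (simp_all add: P'_def Q'_def R'_def)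
  have D: "tri P' Q' R' \<subseteq> unit_disk"
    unfolding tri_def unit_disk_def using nrm by (intro hull_ball) simp_all
  have sim: "similar_tri (tri P' Q' R') (tri P Q R)"
  proof -
    define f where "f = (\<lambda>x. g + (1/k) *\<^sub>R x)"
    have fv: "f P' = P" "f Q' = Q" "f R' = R" using k by (simp_all add: f_def P'_def Q'_def R'_def)
    have "f ` {P', Q', R'} = {P, Q, R}" using fv by auto
    then have "f ` (convex hull {P', Q', R'}) = convex hull {P, Q, R}"
      using convex_hull_affinity[of g "1/k" "{P', Q', R'}"] by (simp add: f_def)
    moreover have "\<forall>x y. dist (f x) (f y) = (1/k) * dist x y"
    proof (intro allI)
      fix x y
      have "f x - f y = (1/k) *\<^sub>R (x - y)" by (simp add: f_def algebra_simps)
      then show "dist (f x) (f y) = (1/k) * dist x y" using k by (simp add: dist_norm)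
    qed
    moreover have "1/k > 0" using k by simp
    ultimately show ?thesis unfolding similar_tri_def tri_def by blast
  qed
  have univ: "\<forall>P'' Q'' R''. nondegenerate P'' Q'' R'' \<and> tri P'' Q'' R'' \<subseteq> unit_disk \<and>
         congruent_tri (tri P'' Q'' R'') (tri P' Q' R') \<longrightarrow>
         has_rotation_number (tri P'' Q'' R'') (1/3)"
  proof (intro allI impI)
    fix P'' Q'' R''
    assume h: "nondegenerate P'' Q'' R'' \<and> tri P'' Q'' R'' \<subseteq> unit_disk \<and> congruent_tri (tri P'' Q'' R'') (tri P' Q' R')"
    then obtain f where f: "\<forall>x y. dist (f x) (f y) = dist x y"
      and img: "f ` (convex hull {P'',Q'',R''}) = convex hull {P',Q',R'}"
      unfolding congruent_tri_def tri_def by blast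
    have f1: "\<forall>x y. dist (f x) (f y) = 1 * dist x y" using f by simp
    have E'': "dist P'' Q'' = m0" "dist Q'' R'' = m0" "dist R'' P'' = m0"
      using rigid[OF _ f1 img E' m0] by simp_all
    have in1: "P'' \<in> tri P'' Q'' R''" "Q'' \<in> tri P'' Q'' R''" "R'' \<in> tri P'' Q'' R''"
      unfolding tri_def by (rule hull_inc, simp)+
    have n1: "norm P'' < 1" "norm Q'' < 1" "norm R'' < 1"
      using h in1 unfolding unit_disk_def by (auto simp: in_ball_norm subset_iff)
    have m2: "m0^2 = 3/4" by (simp add: m0_def power_divide)
    have sq: "(cmod (Q'' - P''))^2 = 3/4" "(cmod (R'' - Q''))^2 = 3/4" "(cmod (P'' - R''))^2 = 3/4"
      using E'' m2 by (simp_all add: dist_norm norm_minus_commute)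
    show "has_rotation_number (tri P'' Q'' R'') (1/3)"
      unfolding tri_def by (rule positive_dir[OF n1 sq])
  qed
  show ?thesis using kap nd D sim univ by blast
qed

theorem proposition5p3:
  fixes P Q R :: complex
  assumes "P \<noteq> Q" and "dist P Q = dist Q R" and "dist Q R = dist R P"
  shows "mu P Q R = 1/2"
proof -
  define L where "L = dist P Q"
  have L: "L > 0" using assms(1) by (simp add: L_def)
  have E: "dist P Q = L" "dist Q R = L" "dist R P = L" using assms by (simp_all add: L_def)
  obtain P' Q' R' where h: "kappa P' Q' R' = 1/2 \<and> nondegenerate P' Q' R' \<and> tri P' Q' R' \<subseteq> unit_disk \<and>
      similar_tri (tri P' Q' R') (tri P Q R) \<and>
      (\<forall>P'' Q'' R''. nondegenerate P'' Q'' R'' \<and> tri P'' Q'' R'' \<subseteq> unit_disk \<and>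
         congruent_tri (tri P'' Q'' R'') (tri P' Q' R') \<longrightarrow>
         has_rotation_number (tri P'' Q'' R'') (1/3))"
    using half_in[OF E L] by blast
  show ?thesis unfolding mu_def
  proof (rule cInf_eq_minimum)
    show "1/2 \<in> {kappa P' Q' R' | P' Q' R'.
      nondegenerate P' Q' R' \<and> tri P' Q' R' \<subseteq> unit_disk \<and>
      similar_tri (tri P' Q' R') (tri P Q R) \<and>
      (\<forall>P'' Q'' R''. nondegenerate P'' Q'' R'' \<and> tri P'' Q'' R'' \<subseteq> unit_disk \<and>
         congruent_tri (tri P'' Q'' R'') (tri P' Q' R') \<longrightarrow>
         has_rotation_number (tri P'' Q'' R'') (1/3))}"
      using h by force
  next
    fix x assume "x \<in> {kappa P' Q' R' | P' Q' R'.
      nondegenerate P' Q' R' \<and> tri P' Q' R' \<subseteq> unit_disk \<and>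
      similar_tri (tri P' Q' R') (tri P Q R) \<and>
      (\<forall>P'' Q'' R''. nondegenerate P'' Q'' R'' \<and> tri P'' Q'' R'' \<subseteq> unit_disk \<and>
         congruent_tri (tri P'' Q'' R'') (tri P' Q' R') \<longrightarrow>
         has_rotation_number (tri P'' Q'' R'') (1/3))}"
    then obtain P1 Q1 R1 where x: "x = kappa P1 Q1 R1" and nd: "nondegenerate P1 Q1 R1"
      and sim: "similar_tri (tri P1 Q1 R1) (tri P Q R)"
      and univ: "\<forall>P'' Q'' R''. nondegenerate P'' Q'' R'' \<and> tri P'' Q'' R'' \<subseteq> unit_disk \<and>
         congruent_tri (tri P'' Q'' R'') (tri P1 Q1 R1) \<longrightarrow>
         has_rotation_number (tri P'' Q'' R'') (1/3)"
      by blast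
    show "1/2 \<le> x" unfolding x by (rule lower_bound_elem[OF E L nd sim univ])
  qed
qed

end
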